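(* Let $M^Q(a|x)$ and $N^{Q'}(b|y)$ be PMDs. Then $M^Q(a|x)\succeq N^{Q'}(b|y)$ if and only if $M^Q(a|x)$ can be converted to $N^{Q'}(b|y)$ by a one-way LOCC from Alice to Bob, in the spatial model in which the PMD is regarded as a bipartite channel whose quantum input is held by Alice and whose program input and classical outcome are held by Bob.
   Context: All Hilbert spaces are finite-dimensional and all alphabets are finite. A PMD on $\mathcal{H}^Q$ with program set $\mathcal{X}$ and outcome set $\mathcal{A}$ is a family $\{M^Q(a|x)\}$ of operators on $\mathcal{H}^Q$ with $M^Q(a|x)\ge0$ and $\sum_a M^Q(a|x)=\mathbb{1}^Q$ for every $x$. In the spatial model, such a PMD is a bipartite channel: Alice inputs a quantum state on $\mathcal{H}^Q$, Bob inputs $x$ and receives $a$ with probability $\mathrm{Tr}[\rho M^Q(a|x)]$. A one-way LOCC conversion from Alice to Bob of $M^Q(a|x)$ into a device with Alice's quantum input $\mathcal{H}^{Q'}$, Bob's input $y$ and Bob's output $b$ consists of: a pre-processing by one-way LOCC (Alice to Bob) acting on Alice's input in $\mathcal{H}^{Q'}$ and Bob's input $y$, producing the input on $\mathcal{H}^Q$ for Alice's side of $M$ and the program $x$ on Bob's side; side memories that may be quantum on Alice's side and classical on Bob's side; and a post-processing by one-way LOCC (Alice to Bob) using the side memories and Bob's outcome $a$ to produce $b$; shared randomness is allowed. $M^Q(a|x)\succeq N^{Q'}(b|y)$ means that there exist a probability distribution $\mu(r)$, for each $r$ a quantum instrument $\{\mathcal{E}^{Q'\to Q}_{i|r}\}_i$,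 and conditional probability distributions $p(x|i,y,r)$, $q(b|a,x,i,y,r)$ such that for all $b,y$ \[N^{Q'}(b|y)=\sum_r\mu(r)\sum_{i,x,a}q(b|a,x,i,y,r)\,p(x|i,y,r)\,(\mathcal{E}^{Q'\to Q}_{i|r})^\dagger[M^Q(a|x)],\] with $\mathcal{E}^\dagger$ the adjoint (trace-dual) map. *)

theory Defs
  imports "Jordan_Normal_Form.Schur_Decomposition"
begin

definition msum :: "nat \<Rightarrow> nat \<Rightarrow> ('i \<Rightarrow> complex mat) \<Rightarrow> 'i set \<Rightarrow> complex mat" where
  "msum d1 d2 f S = mat d1 d2 (\<lambda>(u,v). \<Sum>s\<in>S. f s $$ (u,v))"

definition mtr :: "complex mat \<Rightarrow> complex" where
  "mtr A = (\<Sum>u<dim_row A. A $$ (u,u))"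

definition kron :: "complex mat \<Rightarrow> complex mat \<Rightarrow> complex mat" where
  "kron A B = mat (dim_row A * dim_row B) (dim_col A * dim_col B)
     (\<lambda>(u,v). A $$ (u div dim_row B, v div dim_col B) * B $$ (u mod dim_row B, v mod dim_col B))"

definition psd :: "nat \<Rightarrow> complex mat \<Rightarrow> bool" where
  "psd d A \<longleftrightarrow> A \<in> carrier_mat d d \<and>
     (\<forall>v \<in> carrier_vec d. Im ((A *\<^sub>v v) \<bullet>c v) = 0 \<and> Re ((A *\<^sub>v v) \<bullet>c v) \<ge> 0)"

definition density :: "nat \<Rightarrow> complex mat \<Rightarrow> bool" where
  "density d \<rho> \<longleftrightarrow> psd d \<rho> \<and> mtr \<rho> = 1"

definition povm :: "nat \<Rightarrow> ('i \<Rightarrow> complex mat) \<Rightarrow> 'i set \<Rightarrow> bool" where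
  "povm d F S \<longleftrightarrow> (\<forall>s\<in>S. psd d (F s)) \<and> msum d d F S = 1\<^sub>m d"

text \<open>PMD on C^d: M x a is the operator M(a|x); program set 'x, outcome set 'a (finite types).\<close>
definition pmd :: "nat \<Rightarrow> ('x::finite \<Rightarrow> 'a::finite \<Rightarrow> complex mat) \<Rightarrow> bool" where
  "pmd d M \<longleftrightarrow> (\<forall>x. povm d (M x) UNIV)"

definition distr :: "('i \<Rightarrow> real) \<Rightarrow> 'i set \<Rightarrow> bool" where
  "distr p S \<longleftrightarrow> (\<forall>s\<in>S. p s \<ge> 0) \<and> (\<Sum>s\<in>S. p s) = 1"

text \<open>An instrument from C^din to C^dout with outcomes i < nI; the CP map of outcome i
  has Kraus operators K i k, k < nK (dout x din matrices); the sum is trace preserving.\<close>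
definition instrument :: "nat \<Rightarrow> nat \<Rightarrow> nat \<Rightarrow> nat \<Rightarrow> (nat \<Rightarrow> nat \<Rightarrow> complex mat) \<Rightarrow> bool" where
  "instrument din dout nI nK K \<longleftrightarrow>
     (\<forall>i<nI. \<forall>k<nK. K i k \<in> carrier_mat dout din) \<and>
     msum din din (\<lambda>(i,k). mat_adjoint (K i k) * K i k) ({..<nI} \<times> {..<nK}) = 1\<^sub>m din"

definition kraus_apply :: "nat \<Rightarrow> (nat \<Rightarrow> nat \<Rightarrow> complex mat) \<Rightarrow> nat \<Rightarrow> nat \<Rightarrow> complex mat \<Rightarrow> complex mat" where
  "kraus_apply dout K nK i \<rho> = msum dout dout (\<lambda>k. K i k * \<rho> * mat_adjoint (K i k)) {..<nK}"

definition kraus_adj :: "nat \<Rightarrow> (nat \<Rightarrow> nat \<Rightarrow> complex mat) \<Rightarrow> nat \<Rightarrow> nat \<Rightarrow> complex mat \<Rightarrow> complex mat" where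
  "kraus_adj din K nK i A = msum din din (\<lambda>k. mat_adjoint (K i k) * A * K i k) {..<nK}"

text \<open>M on C^dQ with M x a = M(a|x); N on C^dQ' with N y b = N(b|y).
  Shared randomness r < nR with law mu; instrument K r from Q' to Q;
  p i y r x = p(x|i,y,r); q a x i y r b = q(b|a,x,i,y,r).\<close>
definition pmd_succeq ::
  "nat \<Rightarrow> ('x::finite \<Rightarrow> 'a::finite \<Rightarrow> complex mat) \<Rightarrow>
   nat \<Rightarrow> ('y::finite \<Rightarrow> 'b::finite \<Rightarrow> complex mat) \<Rightarrow> bool" where
  "pmd_succeq dQ M dQ' N \<longleftrightarrow>
   (\<exists>nR (\<mu>::nat \<Rightarrow> real) nI nK (K::nat \<Rightarrow> nat \<Rightarrow> nat \<Rightarrow> complex mat)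
      (p::nat \<Rightarrow> 'y \<Rightarrow> nat \<Rightarrow> 'x \<Rightarrow> real) (q::'a \<Rightarrow> 'x \<Rightarrow> nat \<Rightarrow> 'y \<Rightarrow> nat \<Rightarrow> 'b \<Rightarrow> real).
      distr \<mu> {..<nR} \<and>
      (\<forall>r<nR. instrument dQ' dQ nI nK (K r)) \<and>
      (\<forall>i<nI. \<forall>y. \<forall>r<nR. distr (p i y r) UNIV) \<and>
      (\<forall>a x. \<forall>i<nI. \<forall>y. \<forall>r<nR. distr (q a x i y r) UNIV) \<and>
      (\<forall>b y. N y b = msum dQ' dQ'
          (\<lambda>(r,i,x,a). complex_of_real (\<mu> r * p i y r x * q a x i y r b) \<cdot>\<^sub>m
                         kraus_adj dQ' (K r) nK i (M x a))
          ({..<nR} \<times> {..<nI} \<times> UNIV \<times> UNIV)))"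

text \<open>Operational one-way LOCC conversion of M (Alice: quantum input C^dQ; Bob: program x,
  outcome a) into a device with Alice's quantum input C^dQ', Bob's input y and output b.
  With shared randomness r < nR (law mu):
  pre-processing: Alice applies an instrument A r (outcomes i < nI, Kraus ops k < nK) from
    C^dQ' to C^dQ (x) C^dK, where C^dK is her quantum side memory, and sends i to Bob;
    Bob, knowing i, y, r, samples the program x together with a classical side memory
    m < nm with probability p i y r (m,x);
  the system C^dQ is fed into Alice's side of M, Bob obtains a;
  post-processing: Alice measures her memory with a POVM F r i (outcomes j < nJ) and sends j
    to Bob; Bob outputs b with probability q a x m j i y r b.\<close>
definition oneway_LOCC_convertible ::
  "nat \<Rightarrow> ('x::finite \<Rightarrow> 'a::finite \<Rightarrow> complex mat) \<Rightarrow>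
   nat \<Rightarrow> ('y::finite \<Rightarrow> 'b::finite \<Rightarrow> complex mat) \<Rightarrow> bool" where
  "oneway_LOCC_convertible dQ M dQ' N \<longleftrightarrow>
   (\<exists>nR (\<mu>::nat \<Rightarrow> real) nI nK dK (A::nat \<Rightarrow> nat \<Rightarrow> nat \<Rightarrow> complex mat)
      nm (p::nat \<Rightarrow> 'y \<Rightarrow> nat \<Rightarrow> nat \<times> 'x \<Rightarrow> real)
      nJ (F::nat \<Rightarrow> nat \<Rightarrow> nat \<Rightarrow> complex mat)
      (q::'a \<Rightarrow> 'x \<Rightarrow> nat \<Rightarrow> nat \<Rightarrow> nat \<Rightarrow> 'y \<Rightarrow> nat \<Rightarrow> 'b \<Rightarrow> real).
      distr \<mu> {..<nR} \<and>
      (\<forall>r<nR. instrument dQ' (dQ * dK) nI nK (A r)) \<and>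
      (\<forall>i<nI. \<forall>y. \<forall>r<nR. distr (p i y r) ({..<nm} \<times> UNIV)) \<and>
      (\<forall>r<nR. \<forall>i<nI. povm dK (F r i) {..<nJ}) \<and>
      (\<forall>a x. \<forall>m<nm. \<forall>j<nJ. \<forall>i<nI. \<forall>y. \<forall>r<nR. distr (q a x m j i y r) UNIV) \<and>
      (\<forall>\<rho>. density dQ' \<rho> \<longrightarrow> (\<forall>y b.
         mtr (N y b * \<rho>) =
         (\<Sum>(r,i,(m,x),a,j) \<in> {..<nR} \<times> {..<nI} \<times> ({..<nm} \<times> UNIV) \<times> UNIV \<times> {..<nJ}.
            complex_of_real (\<mu> r * p i y r (m,x) * q a x m j i y r b) *
            mtr (kron (M x a) (F r i j) * kraus_apply (dQ * dK) (A r) nK i \<rho>)))))"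

end

theory Submission
  imports Defs
begin


lemma msum_dim[simp]: "dim_row (msum d1 d2 f S) = d1" "dim_col (msum d1 d2 f S) = d2"
  by (auto simp: msum_def)
lemma msum_carrier[simp]: "msum d1 d2 f S \<in> carrier_mat d1 d2"
  by (simp add: msum_def)
lemma msum_index[simp]: "s < d1 \<Longrightarrow> t < d2 \<Longrightarrow> msum d1 d2 f S $$ (s,t) = (\<Sum>x\<in>S. f x $$ (s,t))"
  by (simp add: msum_def)

lemma adj_dim[simp]: "dim_row (mat_adjoint A) = dim_col A" "dim_col (mat_adjoint A) = dim_row A"
  by (auto simp: mat_adjoint_def mat_of_rows_def)
lemma adj_carrier: "A \<in> carrier_mat n m \<Longrightarrow> mat_adjoint A \<in> carrier_mat m n"
  unfolding carrier_mat_def by simp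
lemma adj_index[simp]: "i < dim_col A \<Longrightarrow> j < dim_row A \<Longrightarrow> mat_adjoint A $$ (i,j) = cnj (A $$ (j,i))"
  by (simp add: mat_adjoint_def mat_of_rows_def)

lemma mult_index: "i < dim_row A \<Longrightarrow> j < dim_col B \<Longrightarrow> dim_col A = dim_row B \<Longrightarrow> (A * B) $$ (i,j) = (\<Sum>k<dim_col A. A $$ (i,k) * B $$ (k,j))"
  by (auto simp: scalar_prod_def atLeast0LessThan intro!: sum.cong)

declare index_mult_mat(1)[simp del]

lemma mtr_mult: "A \<in> carrier_mat n m \<Longrightarrow> B \<in> carrier_mat m n \<Longrightarrow>
   mtr (A * B) = (\<Sum>u<n. \<Sum>v<m. A $$ (u,v) * B $$ (v,u))"
  by (auto simp: mtr_def mult_index intro!: sum.cong)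

lemma mtr_cyc: "A \<in> carrier_mat n m \<Longrightarrow> B \<in> carrier_mat m n \<Longrightarrow> mtr (A * B) = mtr (B * A)"
  apply (simp add: mtr_mult)
  apply (subst sum.swap)
  apply (simp add: mult.commute)
  done

lemma kron_dim[simp]: "dim_row (kron A B) = dim_row A * dim_row B" "dim_col (kron A B) = dim_col A * dim_col B"
  by (auto simp: kron_def)
lemma kron_index: "u < dim_row A * dim_row B \<Longrightarrow> v < dim_col A * dim_col B \<Longrightarrow>
  kron A B $$ (u,v) = A $$ (u div dim_row B, v div dim_col B) * B $$ (u mod dim_row B, v mod dim_col B)"
  by (auto simp: kron_def)

lemma adj_mult: fixes A B :: "complex mat" assumes "A \<in> carrier_mat n m" "B \<in> carrier_mat m k" shows "mat_adjoint (A * B) = mat_adjoint B * mat_adjoint A"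
proof (rule eq_matI)
  fix i j assume "i < dim_row (mat_adjoint B * mat_adjoint A)" "j < dim_col (mat_adjoint B * mat_adjoint A)"
  hence ij: "i < k" "j < n" using assms by auto
  have "mat_adjoint (A * B) $$ (i, j) = cnj ((A * B) $$ (j, i))"
    using assms ij by (intro adj_index) auto
  also have "\<dots> = (\<Sum>l<m. cnj (A $$ (j,l)) * cnj (B $$ (l,i)))"
    using assms ij by (simp add: mult_index)
  also have "\<dots> = (mat_adjoint B * mat_adjoint A) $$ (i, j)"
    using assms ij by (simp add: mult_index mult.commute)
  finally show "mat_adjoint (A * B) $$ (i, j) = (mat_adjoint B * mat_adjoint A) $$ (i, j)" .
qed (use assms in auto)

lemma sum_swap3: "(\<Sum>s\<in>A. \<Sum>b\<in>B. \<Sum>a\<in>C. g s b a) = (\<Sum>a\<in>C. \<Sum>b\<in>B. \<Sum>s\<in>A. g s b a)"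
proof -
  have "(\<Sum>s\<in>A. \<Sum>b\<in>B. \<Sum>a\<in>C. g s b a) = (\<Sum>s\<in>A. \<Sum>a\<in>C. \<Sum>b\<in>B. g s b a)"
    by (rule sum.cong[OF refl], rule sum.swap)
  also have "\<dots> = (\<Sum>a\<in>C. \<Sum>s\<in>A. \<Sum>b\<in>B. g s b a)" by (rule sum.swap)
  also have "\<dots> = (\<Sum>a\<in>C. \<Sum>b\<in>B. \<Sum>s\<in>A. g s b a)"
    by (rule sum.cong[OF refl], rule sum.swap)
  finally show ?thesis .
qed

lemma sum_rot3: "(\<Sum>a\<in>A. \<Sum>b\<in>B. \<Sum>c\<in>C. g a b c) = (\<Sum>c\<in>C. \<Sum>a\<in>A. \<Sum>b\<in>B. g a b c)"
proof -
  have "(\<Sum>a\<in>A. \<Sum>b\<in>B. \<Sum>c\<in>C. g a b c) = (\<Sum>a\<in>A. \<Sum>c\<in>C. \<Sum>b\<in>B. g a b c)"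
    by (rule sum.cong[OF refl], rule sum.swap)
  also have "\<dots> = (\<Sum>c\<in>C. \<Sum>a\<in>A. \<Sum>b\<in>B. g a b c)" by (rule sum.swap)
  finally show ?thesis .
qed

lemma mtr_msum_left1: assumes "finite S" "Y \<in> carrier_mat d d" "\<And>s. s \<in> S \<Longrightarrow> f s \<in> carrier_mat d d"
  shows "mtr (msum d d f S * Y) = (\<Sum>s\<in>S. mtr (f s * Y))"
proof -
  have "mtr (msum d d f S * Y) = (\<Sum>u<d. \<Sum>v<d. (\<Sum>s\<in>S. f s $$ (u,v)) * Y $$ (v,u))"
    using assms by (subst mtr_mult[of _ d d]) (auto intro!: sum.cong)
  also have "\<dots> = (\<Sum>s\<in>S. (\<Sum>u<d. \<Sum>v<d. f s $$ (u,v) * Y $$ (v,u)))"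
    apply (simp add: sum_distrib_left sum_distrib_right)
    apply (rule sum_rot3)
    done
  also have "\<dots> = (\<Sum>s\<in>S. mtr (f s * Y))"
    using assms by (intro sum.cong refl) (simp add: mtr_mult[of _ d d])
  finally show ?thesis .
qed

lemma mtr_smult: assumes "X \<in> carrier_mat n m" "Y \<in> carrier_mat m n"
  shows "mtr ((c \<cdot>\<^sub>m X) * Y) = c * mtr (X * Y)"
  using assms by (simp add: mult_smult_assoc_mat[OF assms] mtr_def sum_distrib_left)

lemma mtr_msum_right: assumes "finite S" "X \<in> carrier_mat d d" "\<And>s. s \<in> S \<Longrightarrow> f s \<in> carrier_mat d d"
  shows "mtr (X * msum d d f S) = (\<Sum>s\<in>S. mtr (X * f s))"
proof -
  have "mtr (X * msum d d f S) = mtr (msum d d f S * X)" using assms by (intro mtr_cyc) auto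
  also have "\<dots> = (\<Sum>s\<in>S. mtr (f s * X))" using assms by (rule mtr_msum_left1)
  also have "\<dots> = (\<Sum>s\<in>S. mtr (X * f s))" using assms by (intro sum.cong refl mtr_cyc) auto
  finally show ?thesis .
qed

lemma msum_sandwich: assumes "P \<in> carrier_mat m n" "Q \<in> carrier_mat n m" "finite S"
  "\<And>s. s \<in> S \<Longrightarrow> X s \<in> carrier_mat n n"
  shows "msum m m (\<lambda>s. P * X s * Q) S = P * msum n n X S * Q"
proof (rule eq_matI)
  fix i j assume ij: "i < dim_row (P * msum n n X S * Q)" "j < dim_col (P * msum n n X S * Q)"
  hence i: "i < m" and j: "j < m" using assms by auto
  have "(\<Sum>s\<in>S. (P * X s * Q) $$ (i, j)) = (\<Sum>s\<in>S. \<Sum>a<n. P $$ (i,a) * (\<Sum>b<n. X s $$ (a,b) * Q $$ (b,j)))"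
  proof (intro sum.cong refl)
    fix s assume "s \<in> S"
    hence Xs: "X s \<in> carrier_mat n n" using assms by auto
    show "(P * X s * Q) $$ (i, j) = (\<Sum>a<n. P $$ (i,a) * (\<Sum>b<n. X s $$ (a,b) * Q $$ (b,j)))"
      using assms Xs i j by (simp add: mult_index)
  qed
  also have "\<dots> = (\<Sum>a<n. P $$ (i,a) * (\<Sum>b<n. (\<Sum>s\<in>S. X s $$ (a,b)) * Q $$ (b,j)))"
    apply (simp add: sum_distrib_left sum_distrib_right)
    apply (rule sum_rot3[symmetric])
    done
  also have "\<dots> = (P * msum n n X S * Q) $$ (i, j)"
    using assms i j apply (simp add: mult_index)
    apply (simp add: sum_distrib_left sum_distrib_right mult.assoc)
    apply (rule sum.swap)
    done
  finally show "msum m m (\<lambda>s. P * X s * Q) S $$ (i, j) = (P * msum n n X S * Q) $$ (i, j)"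
    using i j by simp
qed (use assms in auto)

lemma kraus_adj_carrier[simp]: "kraus_adj din K nK i A \<in> carrier_mat din din"
  by (simp add: kraus_adj_def)
lemma kraus_apply_carrier[simp]: "kraus_apply dout K nK i A \<in> carrier_mat dout dout"
  by (simp add: kraus_apply_def)

lemma kraus_duality: assumes "\<And>k. k < nK \<Longrightarrow> K i k \<in> carrier_mat dout din"
  "A \<in> carrier_mat dout dout" "\<rho> \<in> carrier_mat din din"
  shows "mtr (kraus_adj din K nK i A * \<rho>) = mtr (A * kraus_apply dout K nK i \<rho>)"
proof -
  have "mtr (kraus_adj din K nK i A * \<rho>) = (\<Sum>k<nK. mtr (mat_adjoint (K i k) * A * K i k * \<rho>))"
    unfolding kraus_adj_def using assms adj_carrier by (intro mtr_msum_left1) (auto intro!: mult_carrier_mat)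
  also have "\<dots> = (\<Sum>k<nK. mtr (A * (K i k * \<rho> * mat_adjoint (K i k))))"
  proof (intro sum.cong refl)
    fix k assume "k \<in> {..<nK}"
    hence Kc: "K i k \<in> carrier_mat dout din" using assms by auto
    have Ac: "mat_adjoint (K i k) \<in> carrier_mat din dout" using Kc by (rule adj_carrier)
    have Ar: "A \<in> carrier_mat dout dout" "\<rho> \<in> carrier_mat din din" using assms by auto
    have KA: "mat_adjoint (K i k) * A \<in> carrier_mat din dout" using Ac Ar by simp
    have Kr: "K i k * \<rho> \<in> carrier_mat dout din" using Kc Ar by simp
    have AKr: "A * (K i k * \<rho>) \<in> carrier_mat dout din" using Kr Ar by simp
    have "mat_adjoint (K i k) * A * K i k * \<rho> = mat_adjoint (K i k) * A * (K i k * \<rho>)"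
      by (rule assoc_mult_mat[OF KA Kc Ar(2)])
    also have "\<dots> = mat_adjoint (K i k) * (A * (K i k * \<rho>))"
      by (rule assoc_mult_mat[OF Ac Ar(1) Kr])
    finally have "mtr (mat_adjoint (K i k) * A * K i k * \<rho>) = mtr (mat_adjoint (K i k) * (A * (K i k * \<rho>)))" by simp
    also have "\<dots> = mtr ((A * (K i k * \<rho>)) * mat_adjoint (K i k))"
      by (rule mtr_cyc[OF Ac AKr])
    also have "(A * (K i k * \<rho>)) * mat_adjoint (K i k) = A * (K i k * \<rho> * mat_adjoint (K i k))"
      by (rule assoc_mult_mat[OF Ar(1) Kr Ac])
    finally show "mtr (mat_adjoint (K i k) * A * K i k * \<rho>) = mtr (A * (K i k * \<rho> * mat_adjoint (K i k)))" .
  qed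
  also have "\<dots> = mtr (A * kraus_apply dout K nK i \<rho>)"
    unfolding kraus_apply_def using assms adj_carrier by (intro mtr_msum_right[symmetric]) (auto intro!: mult_carrier_mat)
  finally show ?thesis .
qed


definition qf :: "nat \<Rightarrow> complex mat \<Rightarrow> (nat \<Rightarrow> complex) \<Rightarrow> complex" where
  "qf d A f = (\<Sum>s<d. \<Sum>t<d. cnj (f s) * A $$ (s,t) * f t)"

definition outer :: "nat \<Rightarrow> (nat \<Rightarrow> complex) \<Rightarrow> complex mat" where
  "outer d w = mat d d (\<lambda>(s,t). w s * cnj (w t))"

lemma outer_dim[simp]: "dim_row (outer d w) = d" "dim_col (outer d w) = d" by (auto simp add: outer_def)
lemma outer_carrier[simp]: "outer d w \<in> carrier_mat d d" by (simp add: outer_def)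
lemma outer_index[simp]: "s < d \<Longrightarrow> t < d \<Longrightarrow> outer d w $$ (s,t) = w s * cnj (w t)" by (simp add: outer_def)

lemma quad_form: assumes "A \<in> carrier_mat d d" "v \<in> carrier_vec d"
  shows "(A *\<^sub>v v) \<bullet>c v = qf d A (\<lambda>i. v $ i)"
  using assms unfolding qf_def
  by (auto simp: scalar_prod_def mult_mat_vec_def sum_distrib_right atLeast0LessThan intro!: sum.cong)

lemma psd_iff: "psd d A \<longleftrightarrow> A \<in> carrier_mat d d \<and> (\<forall>f. Im (qf d A f) = 0 \<and> Re (qf d A f) \<ge> 0)"
proof
  assume H: "psd d A"
  hence A: "A \<in> carrier_mat d d" by (simp add: psd_def)
  { fix f :: "nat \<Rightarrow> complex"
    have v: "vec d f \<in> carrier_vec d" by simp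
    have "qf d A f = qf d A (\<lambda>i. vec d f $ i)" unfolding qf_def by (intro sum.cong refl) auto
    hence "qf d A f = (A *\<^sub>v vec d f) \<bullet>c vec d f" using quad_form[OF A v] by simp
    hence "Im (qf d A f) = 0 \<and> Re (qf d A f) \<ge> 0" using H v unfolding psd_def by simp }
  thus "A \<in> carrier_mat d d \<and> (\<forall>f. Im (qf d A f) = 0 \<and> Re (qf d A f) \<ge> 0)" using A by blast
next
  assume H: "A \<in> carrier_mat d d \<and> (\<forall>f. Im (qf d A f) = 0 \<and> Re (qf d A f) \<ge> 0)"
  show "psd d A" unfolding psd_def
  proof (intro conjI ballI)
    fix v :: "complex vec" assume v: "v \<in> carrier_vec d"
    have "(A *\<^sub>v v) \<bullet>c v = qf d A (\<lambda>i. v $ i)" using H v by (intro quad_form) auto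
    thus "Im ((A *\<^sub>v v) \<bullet>c v) = 0" "Re ((A *\<^sub>v v) \<bullet>c v) \<ge> 0" using H by auto
  qed (use H in auto)
qed

lemma qf_outer: "qf d (outer d w) f = cnj (\<Sum>s<d. cnj (f s) * w s) * (\<Sum>s<d. cnj (f s) * w s)"
  unfolding qf_def by (simp add: sum_distrib_left sum_distrib_right mult.commute mult.left_commute)

lemma cnj_self: "cnj z * z = complex_of_real ((cmod z)^2)"
  by (metis complex_norm_square mult.commute)

lemma psd_outer: "psd d (outer d w)"
  unfolding psd_iff qf_outer cnj_self by simp

lemma kron_one1: assumes "M \<in> carrier_mat n n" shows "kron M (1\<^sub>m 1) = M"
  by (rule eq_matI) (use assms in \<open>auto simp: kron_index\<close>)

lemma kron_one1': assumes "M \<in> carrier_mat n n" shows "kron M (1\<^sub>m (Suc 0)) = M"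
  using kron_one1[OF assms] by simp

lemma povm_one: "povm 1 (\<lambda>j::nat. 1\<^sub>m 1) {..<1}"
proof -
  have "outer 1 (\<lambda>_. 1) = 1\<^sub>m 1" by (rule eq_matI) auto
  hence "psd 1 (1\<^sub>m 1)" using psd_outer by metis
  moreover have "msum 1 1 (\<lambda>j::nat. 1\<^sub>m 1) {..<1} = 1\<^sub>m 1" by (rule eq_matI) (auto simp: card_lessThan)
  ultimately show ?thesis unfolding povm_def by simp
qed

lemma pmd_carrier: "pmd d M \<Longrightarrow> M x a \<in> carrier_mat d d"
  unfolding pmd_def povm_def psd_def by auto

lemma dir1: fixes M :: "'x::finite \<Rightarrow> 'a::finite \<Rightarrow> complex mat"
    and N :: "'y::finite \<Rightarrow> 'b::finite \<Rightarrow> complex mat" assumes "pmd dQ M" "pmd dQ' N" "pmd_succeq dQ M dQ' N"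
  shows "oneway_LOCC_convertible dQ M dQ' N"
proof -
  obtain nR nI nK :: nat and \<mu> :: "nat \<Rightarrow> real" and K :: "nat \<Rightarrow> nat \<Rightarrow> nat \<Rightarrow> complex mat"
    and p :: "nat \<Rightarrow> 'y \<Rightarrow> nat \<Rightarrow> 'x \<Rightarrow> real" and q :: "'a \<Rightarrow> 'x \<Rightarrow> nat \<Rightarrow> 'y \<Rightarrow> nat \<Rightarrow> 'b \<Rightarrow> real" where mu: "distr \<mu> {..<nR}" and
    inst: "\<forall>r<nR. instrument dQ' dQ nI nK (K r)" and
    pd: "\<forall>i<nI. \<forall>y. \<forall>r<nR. distr (p i y r) UNIV" and
    qd: "\<forall>a x. \<forall>i<nI. \<forall>y. \<forall>r<nR. distr (q a x i y r) UNIV" and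
    Neq: "\<forall>b y. N y b = msum dQ' dQ'
          (\<lambda>(r,i,x,a). complex_of_real (\<mu> r * p i y r x * q a x i y r b) \<cdot>\<^sub>m
                         kraus_adj dQ' (K r) nK i (M x a))
          ({..<nR} \<times> {..<nI} \<times> UNIV \<times> UNIV)"
    using assms(3) unfolding pmd_succeq_def by blast
  have Kc: "\<And>r i k. r < nR \<Longrightarrow> i < nI \<Longrightarrow> k < nK \<Longrightarrow> K r i k \<in> carrier_mat dQ dQ'"
    using inst unfolding instrument_def by blast
  have Mc: "\<And>x a. M x a \<in> carrier_mat dQ dQ" using assms(1) by (rule pmd_carrier)
  have tr: "mtr (N y b * \<rho>) =
         (\<Sum>(r,i,(m,x),a,j) \<in> {..<nR} \<times> {..<nI} \<times> ({..<1::nat} \<times> UNIV) \<times> UNIV \<times> {..<1::nat}.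
            complex_of_real (\<mu> r * p i y r x * q a x i y r b) *
            mtr (kron (M x a) (1\<^sub>m 1) * kraus_apply (dQ * 1) (K r) nK i \<rho>))"
    if rho: "density dQ' \<rho>" for \<rho> y b
  proof -
    have rc: "\<rho> \<in> carrier_mat dQ' dQ'" using rho unfolding density_def psd_def by simp
    have "mtr (N y b * \<rho>) = (\<Sum>s \<in> {..<nR} \<times> {..<nI} \<times> UNIV \<times> UNIV.
        mtr ((case s of (r,i,x,a) \<Rightarrow> complex_of_real (\<mu> r * p i y r x * q a x i y r b) \<cdot>\<^sub>m
                         kraus_adj dQ' (K r) nK i (M x a)) * \<rho>))"
      unfolding Neq[rule_format] by (rule mtr_msum_left1) (use rc in auto)
    also have "\<dots> = (\<Sum>s \<in> {..<nR} \<times> {..<nI} \<times> UNIV \<times> UNIV.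
        (case s of (r,i,x,a) \<Rightarrow> complex_of_real (\<mu> r * p i y r x * q a x i y r b) *
            mtr (kron (M x a) (1\<^sub>m 1) * kraus_apply (dQ * 1) (K r) nK i \<rho>)))"
    proof (intro sum.cong refl, clarify)
      fix r i x a assume ri: "r < nR" "i < nI"
      show "mtr ((complex_of_real (\<mu> r * p i y r x * q a x i y r b) \<cdot>\<^sub>m kraus_adj dQ' (K r) nK i (M x a)) * \<rho>) =
        complex_of_real (\<mu> r * p i y r x * q a x i y r b) * mtr (kron (M x a) (1\<^sub>m 1) * kraus_apply (dQ * 1) (K r) nK i \<rho>)"
        using kraus_duality[of nK "K r" i dQ dQ' "M x a" \<rho>] Kc ri Mc rc
        by (simp add: mtr_smult[of _ dQ' dQ'] kron_one1'[OF Mc])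
    qed
    also have "\<dots> = (\<Sum>(r,i,(m,x),a,j) \<in> {..<nR} \<times> {..<nI} \<times> ({..<1::nat} \<times> UNIV) \<times> UNIV \<times> {..<1::nat}.
            complex_of_real (\<mu> r * p i y r x * q a x i y r b) *
            mtr (kron (M x a) (1\<^sub>m 1) * kraus_apply (dQ * 1) (K r) nK i \<rho>))"
      by (simp add: sum.cartesian_product' del: UNIV_Times_UNIV)
    finally show ?thesis .
  qed
  show ?thesis
    unfolding oneway_LOCC_convertible_def
    apply (rule exI[of _ nR], rule exI[of _ \<mu>], rule exI[of _ nI], rule exI[of _ nK], rule exI[of _ 1])
    apply (rule exI[of _ K], rule exI[of _ 1], rule exI[of _ "\<lambda>i y r mx. p i y r (snd mx)"])
    apply (rule exI[of _ 1], rule exI[of _ "\<lambda>r i j. 1\<^sub>m 1"])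
    apply (rule exI[of _ "\<lambda>a x m j i y r b. q a x i y r b"])
    apply (intro conjI)
    subgoal by (rule mu)
    subgoal using inst by simp
    subgoal using pd unfolding distr_def by (simp add: sum.cartesian_product')
    subgoal using povm_one by simp
    subgoal using qd by simp
    subgoal using tr by simp
    done
qed


lemma sum_delta_r: "k < d \<Longrightarrow> (\<Sum>t<d::nat. g t * (if t = k then c else 0)) = g k * (c::complex)"
  by (subst sum.mono_neutral_right[of "{..<d}" "{k}"]) auto
lemma sum_delta_l: "k < d \<Longrightarrow> (\<Sum>t<d::nat. (if t = k then c else 0) * g t) = c * (g k::complex)"
  by (subst sum.mono_neutral_right[of "{..<d}" "{k}"]) auto

lemma sum_two_supp: assumes "finite T" "s \<in> T" "t \<in> T" "s \<noteq> t" "\<And>i. i \<in> T \<Longrightarrow> i \<noteq> s \<Longrightarrow> i \<noteq> t \<Longrightarrow> g i = 0"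
  shows "sum g T = g s + (g t :: complex)"
proof -
  have "sum g T = sum g {s,t}" using assms by (intro sum.mono_neutral_right) auto
  thus ?thesis using assms by simp
qed

lemma qf_one: assumes "s < d" shows "qf d A (\<lambda>i. if i = s then \<alpha> else 0) = cnj \<alpha> * A $$ (s,s) * \<alpha>"
proof -
  have "qf d A (\<lambda>i. if i = s then \<alpha> else 0) = (\<Sum>s'<d. (if s' = s then cnj \<alpha> else 0) * (\<Sum>t<d. A $$ (s',t) * (if t = s then \<alpha> else 0)))"
    unfolding qf_def by (intro sum.cong refl) (auto simp: sum_distrib_left mult.assoc)
  also have "\<dots> = cnj \<alpha> * (A $$ (s,s) * \<alpha>)" using assms by (simp add: sum_delta_l sum_delta_r)
  finally show ?thesis by (simp add: mult.assoc)
qed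

lemma qf_two: assumes "s < d" "t < d" "s \<noteq> t"
  shows "qf d A (\<lambda>i. if i = s then \<alpha> else if i = t then \<beta> else 0) =
     cnj \<alpha> * (A $$ (s,s) * \<alpha> + A $$ (s,t) * \<beta>) + cnj \<beta> * (A $$ (t,s) * \<alpha> + A $$ (t,t) * \<beta>)"
proof -
  let ?f = "\<lambda>i. if i = s then \<alpha> else if i = t then \<beta> else 0"
  have inner: "(\<Sum>t'<d. A $$ (s',t') * ?f t') = A $$ (s',s) * \<alpha> + A $$ (s',t) * \<beta>" for s'
    using assms by (subst sum_two_supp[of _ s t]) auto
  have "qf d A ?f = (\<Sum>s'<d. cnj (?f s') * (\<Sum>t'<d. A $$ (s',t') * ?f t'))"
    unfolding qf_def by (intro sum.cong refl) (simp add: sum_distrib_left mult.assoc)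
  also have "\<dots> = (\<Sum>s'<d. cnj (?f s') * (A $$ (s',s) * \<alpha> + A $$ (s',t) * \<beta>))"
    by (simp only: inner)
  also have "\<dots> = cnj \<alpha> * (A $$ (s,s) * \<alpha> + A $$ (s,t) * \<beta>) + cnj \<beta> * (A $$ (t,s) * \<alpha> + A $$ (t,t) * \<beta>)"
    using assms by (subst sum_two_supp[of _ s t]) auto
  finally show ?thesis .
qed

lemma psd_diag: assumes "psd d A" "s < d" shows "Im (A $$ (s,s)) = 0" "Re (A $$ (s,s)) \<ge> 0"
proof -
  have "qf d A (\<lambda>i. if i = s then 1 else 0) = A $$ (s,s)" using qf_one[OF assms(2)] by simp
  thus "Im (A $$ (s,s)) = 0" "Re (A $$ (s,s)) \<ge> 0" using assms(1) unfolding psd_iff by metis+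
qed

lemma psd_herm: assumes "psd d A" "s < d" "t < d" shows "A $$ (t,s) = cnj (A $$ (s,t))"
proof (cases "s = t")
  case True thus ?thesis using psd_diag[OF assms(1,2)] by (simp add: complex_eq_iff)
next
  case False
  have q1: "qf d A (\<lambda>i. if i = s then 1 else if i = t then 1 else 0) = A $$ (s,s) + A $$ (s,t) + A $$ (t,s) + A $$ (t,t)"
    using qf_two[OF assms(2,3) False] by simp
  have q2: "qf d A (\<lambda>i. if i = s then 1 else if i = t then \<i> else 0) = A $$ (s,s) + \<i> * A $$ (s,t) - \<i> * A $$ (t,s) + A $$ (t,t)"
    using qf_two[OF assms(2,3) False] by (simp add: algebra_simps)
  have i1: "Im (A $$ (s,s) + A $$ (s,t) + A $$ (t,s) + A $$ (t,t)) = 0" using assms(1) q1 unfolding psd_iff by metis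
  have i2: "Im (A $$ (s,s) + \<i> * A $$ (s,t) - \<i> * A $$ (t,s) + A $$ (t,t)) = 0" using assms(1) q2 unfolding psd_iff by metis
  show ?thesis using i1 i2 psd_diag[OF assms(1,2)] psd_diag[OF assms(1,3)] by (simp add: complex_eq_iff)
qed

lemma qf_shift: assumes herm: "\<And>s t. s < d \<Longrightarrow> t < d \<Longrightarrow> A $$ (t,s) = cnj (A $$ (s,t))" and k: "k < d"
  shows "qf d A (\<lambda>i. f i + (if i = k then c else 0)) =
    qf d A f + c * cnj (\<Sum>t<d. A $$ (k,t) * f t) + cnj c * (\<Sum>t<d. A $$ (k,t) * f t) + cnj c * A $$ (k,k) * c"
proof -
  let ?D = "\<lambda>i. if i = k then c else 0"
  let ?D' = "\<lambda>i. if i = k then cnj c else 0"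
  have cD: "cnj (f s + ?D s) = cnj (f s) + ?D' s" for s by simp
  have "qf d A (\<lambda>i. f i + ?D i) = (\<Sum>s<d. \<Sum>t<d. cnj (f s) * A $$ (s,t) * f t + cnj (f s) * A $$ (s,t) * ?D t
      + ?D' s * A $$ (s,t) * f t + ?D' s * A $$ (s,t) * ?D t)"
    unfolding qf_def cD by (intro sum.cong refl) (simp add: algebra_simps)
  also have "\<dots> = qf d A f + (\<Sum>s<d. \<Sum>t<d. cnj (f s) * A $$ (s,t) * ?D t) + (\<Sum>s<d. \<Sum>t<d. ?D' s * A $$ (s,t) * f t)
     + (\<Sum>s<d. \<Sum>t<d. ?D' s * A $$ (s,t) * ?D t)"
    unfolding qf_def by (simp add: sum.distrib)
  also have "(\<Sum>s<d. \<Sum>t<d. cnj (f s) * A $$ (s,t) * ?D t) = (\<Sum>s<d. cnj (f s) * A $$ (s,k) * c)"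
    using k by (intro sum.cong refl) (rule sum_delta_r)
  also have "\<dots> = (\<Sum>s<d. c * (cnj (A $$ (k,s)) * cnj (f s)))"
  proof (intro sum.cong refl)
    fix s assume "s \<in> {..<d}"
    hence "A $$ (s,k) = cnj (A $$ (k,s))" using herm[of k s] k by simp
    thus "cnj (f s) * A $$ (s,k) * c = c * (cnj (A $$ (k,s)) * cnj (f s))" by simp
  qed
  also have "\<dots> = c * cnj (\<Sum>t<d. A $$ (k,t) * f t)"
    by (simp add: sum_distrib_left)
  also have "(\<Sum>s<d. \<Sum>t<d. ?D' s * A $$ (s,t) * f t) = (\<Sum>s<d. ?D' s * (\<Sum>t<d. A $$ (s,t) * f t))"
    by (simp add: sum_distrib_left mult.assoc)
  also have "\<dots> = cnj c * (\<Sum>t<d. A $$ (k,t) * f t)" using k by (rule sum_delta_l)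
  also have "(\<Sum>s<d. \<Sum>t<d. ?D' s * A $$ (s,t) * ?D t) = (\<Sum>s<d. ?D' s * (\<Sum>t<d. A $$ (s,t) * ?D t))"
    by (simp add: sum_distrib_left mult.assoc)
  also have "\<dots> = (\<Sum>s<d. ?D' s * (A $$ (s,k) * c))"
    using k by (intro sum.cong refl) (simp add: sum_delta_r)
  also have "\<dots> = cnj c * A $$ (k,k) * c" using k by (simp add: sum_delta_l mult.assoc)
  finally show ?thesis .
qed


lemma psd_row_zero: assumes "psd d G" "k < d" "t < d" "G $$ (k,k) = 0" shows "G $$ (k,t) = 0"
proof (rule ccontr)
  assume nz: "G $$ (k,t) \<noteq> 0"
  hence kt: "k \<noteq> t" using assms by auto
  define z where "z = G $$ (k,t)"
  define n2 where "n2 = (cmod z)^2"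
  have n2pos: "n2 > 0" using nz unfolding n2_def z_def by simp
  define \<tau> where "\<tau> = (Re (G $$ (t,t)) + 1) / (2 * n2)"
  define c where "c = - complex_of_real \<tau> * z"
  have herm: "G $$ (t,k) = cnj z" using psd_herm[OF assms(1,2,3)] z_def by simp
  have "qf d G (\<lambda>i. if i = k then c else if i = t then 1 else 0) =
     cnj c * (G $$ (k,k) * c + G $$ (k,t) * 1) + cnj 1 * (G $$ (t,k) * c + G $$ (t,t) * 1)"
    by (rule qf_two[OF assms(2,3) kt])
  also have "\<dots> = - complex_of_real \<tau> * (cnj z * z) - complex_of_real \<tau> * (cnj z * z) + G $$ (t,t)"
    using assms(4) herm unfolding c_def z_def by (simp add: algebra_simps)
  also have "\<dots> = complex_of_real (- 2 * \<tau> * n2) + G $$ (t,t)"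
    unfolding cnj_self n2_def by simp
  finally have eq: "qf d G (\<lambda>i. if i = k then c else if i = t then 1 else 0) = complex_of_real (- 2 * \<tau> * n2) + G $$ (t,t)" .
  have "Re (qf d G (\<lambda>i. if i = k then c else if i = t then 1 else 0)) \<ge> 0" using assms(1) unfolding psd_iff by blast
  hence "- 2 * \<tau> * n2 + Re (G $$ (t,t)) \<ge> 0" unfolding eq by simp
  moreover have "2 * \<tau> * n2 = Re (G $$ (t,t)) + 1" unfolding \<tau>_def using n2pos by simp
  ultimately show False by linarith
qed

lemma msum_insert_k: assumes "k < d'" "f k \<in> carrier_mat d d"
  shows "msum d d f {k..<d'} = f k + msum d d f {Suc k..<d'}"
  using assms by (intro eq_matI) (auto simp: sum.atLeast_Suc_lessThan)

lemma qf_sub_rank1: "qf d (mat d d (\<lambda>(s,t). G $$ (s,t) - w s * cnj (w t))) f =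
   qf d G f - (\<Sum>s<d. cnj (f s) * w s) * (\<Sum>t<d. cnj (w t) * f t)"
proof -
  have "qf d (mat d d (\<lambda>(s,t). G $$ (s,t) - w s * cnj (w t))) f =
     (\<Sum>s<d. \<Sum>t<d. cnj (f s) * G $$ (s,t) * f t - (cnj (f s) * w s) * (cnj (w t) * f t))"
    unfolding qf_def by (intro sum.cong refl) (simp add: right_diff_distrib left_diff_distrib mult.assoc mult.left_commute)
  also have "\<dots> = qf d G f - (\<Sum>s<d. cnj (f s) * w s) * (\<Sum>t<d. cnj (w t) * f t)"
    unfolding qf_def sum_product by (simp add: sum_subtractf)
  finally show ?thesis .
qed

lemma alg1: assumes "A > 0" shows "Q - cnj z * z / complex_of_real A = Q + (- z / complex_of_real A) * cnj z + cnj (- z / complex_of_real A) * z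
          + cnj (- z / complex_of_real A) * complex_of_real A * (- z / complex_of_real A)"
  using assms by (simp add: field_simps)

lemma sums1: assumes herm: "\<And>s t. s < d \<Longrightarrow> t < d \<Longrightarrow> G $$ (t,s) = cnj (G $$ (s,t))" and kd: "k < d"
  shows "(\<Sum>t<d. cnj (G $$ (t,k) / complex_of_real r) * f t) = (\<Sum>t<d. G $$ (k,t) * f t) / complex_of_real r"
  unfolding sum_divide_distrib
proof (intro sum.cong refl)
  fix t assume "t \<in> {..<d}"
  hence "cnj (G $$ (t,k)) = G $$ (k,t)" using herm[of k t] kd by simp
  thus "cnj (G $$ (t,k) / complex_of_real r) * f t = G $$ (k,t) * f t / complex_of_real r" by simp
qed

lemma sums2: assumes herm: "\<And>s t. s < d \<Longrightarrow> t < d \<Longrightarrow> G $$ (t,s) = cnj (G $$ (s,t))" and kd: "k < d"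
  shows "(\<Sum>s<d. cnj (f s) * (G $$ (s,k) / complex_of_real r)) = cnj (\<Sum>t<d. G $$ (k,t) * f t) / complex_of_real r"
  unfolding sum_divide_distrib cnj_sum
proof (intro sum.cong refl)
  fix t assume "t \<in> {..<d}"
  hence "G $$ (t,k) = cnj (G $$ (k,t))" using herm[of k t] kd by simp
  thus "cnj (f t) * (G $$ (t,k) / complex_of_real r) = cnj (G $$ (k,t) * f t) / complex_of_real r" by simp
qed

lemma chol: assumes "k \<le> d" "psd d G" "\<forall>s<d. \<forall>t<d. (s < k \<or> t < k) \<longrightarrow> G $$ (s,t) = 0"
  shows "\<exists>ws. G = msum d d (\<lambda>l. outer d (ws l)) {k..<d}"
  using assms
proof (induction "d - k" arbitrary: k G)
  case 0
  hence kd: "k = d" by simp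
  have Gc: "G \<in> carrier_mat d d" using 0 unfolding psd_def by simp
  have "G = msum d d (\<lambda>l. outer d ((\<lambda>_ _. 0) l)) {k..<d}"
    using Gc 0 kd by (intro eq_matI) auto
  thus ?case by (intro exI[where x="\<lambda>_ _. 0"]) simp
next
  case (Suc n)
  hence kd: "k < d" by simp
  have Gc: "G \<in> carrier_mat d d" using Suc unfolding psd_def by simp
  have herm: "\<And>s t. s < d \<Longrightarrow> t < d \<Longrightarrow> G $$ (t,s) = cnj (G $$ (s,t))"
    using psd_herm[OF Suc(4)] by blast
  have aIm: "Im (G $$ (k,k)) = 0" and aRe: "Re (G $$ (k,k)) \<ge> 0" using psd_diag[OF Suc(4) kd] by auto
  show ?case
  proof (cases "Re (G $$ (k,k)) = 0")
    case True
    hence a0: "G $$ (k,k) = 0" using aIm by (simp add: complex_eq_iff)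
    have row: "G $$ (k,t) = 0" if "t < d" for t using psd_row_zero[OF Suc(4) kd that a0] .
    have col: "G $$ (s,k) = 0" if "s < d" for s using herm[OF kd that] row[OF that] by simp
    have z: "\<forall>s<d. \<forall>t<d. (s < Suc k \<or> t < Suc k) \<longrightarrow> G $$ (s,t) = 0"
      using Suc(5) row col by (metis less_Suc_eq)
    obtain ws where ws: "G = msum d d (\<lambda>l. outer d (ws l)) {Suc k..<d}"
    proof -
      have "n = d - Suc k" using Suc(2) by arith
      thus ?thesis using that Suc(1)[of "Suc k" G] kd Suc(4) z by auto
    qed
    let ?ws = "ws(k := (\<lambda>_. 0))"
    have "msum d d (\<lambda>l. outer d (?ws l)) {k..<d} = outer d (?ws k) + msum d d (\<lambda>l. outer d (?ws l)) {Suc k..<d}"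
      by (rule msum_insert_k[OF kd]) simp
    also have "?ws k = (\<lambda>_. 0)" by simp
    also have "msum d d (\<lambda>l. outer d (?ws l)) {Suc k..<d} = G"
      unfolding ws by (intro eq_matI) auto
    also have "outer d (\<lambda>_. 0) + G = G" using Gc by (intro eq_matI) auto
    finally show ?thesis by (intro exI[where x="?ws"]) simp
  next
    case False
    define A where "A = Re (G $$ (k,k))"
    have Apos: "A > 0" using False aRe unfolding A_def by simp
    have GA: "G $$ (k,k) = complex_of_real A" using aIm unfolding A_def by (simp add: complex_eq_iff)
    define r where "r = sqrt A"
    have rpos: "r > 0" using Apos unfolding r_def by simp
    have rr: "r * r = A" using Apos unfolding r_def by simp
    define w where "w = (\<lambda>i. G $$ (i,k) / complex_of_real r)"
    define G' where "G' = mat d d (\<lambda>(s,t). G $$ (s,t) - w s * cnj (w t))"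
    have wst: "w s * cnj (w t) = G $$ (s,k) * G $$ (k,t) / complex_of_real A" if "t < d" for s t
    proof -
      have "cnj (G $$ (t,k)) = G $$ (k,t)" using herm[OF that kd] by simp
      thus ?thesis unfolding w_def using rpos rr[symmetric] by (simp add: field_simps)
    qed
    have G'c: "G' \<in> carrier_mat d d" unfolding G'_def by simp
    have G'ij: "G' $$ (s,t) = G $$ (s,t) - G $$ (s,k) * G $$ (k,t) / complex_of_real A" if "s < d" "t < d" for s t
      unfolding G'_def using that wst by simp
    have z': "\<forall>s<d. \<forall>t<d. (s < Suc k \<or> t < Suc k) \<longrightarrow> G' $$ (s,t) = 0"
    proof (intro allI impI)
      fix s t assume st: "s < d" "t < d" "s < Suc k \<or> t < Suc k"
      show "G' $$ (s,t) = 0"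
      proof (cases "s < k \<or> t < k")
        case True
        hence "G $$ (s,t) = 0" "G $$ (s,k) = 0 \<or> G $$ (k,t) = 0" using Suc(5) st kd by blast+
        thus ?thesis using G'ij[OF st(1,2)] by auto
      next
        case False
        hence "s = k \<or> t = k" using st by auto
        thus ?thesis using G'ij[OF st(1,2)] GA Apos by auto
      qed
    qed
    have qfG': "qf d G' f = qf d G (\<lambda>i. f i + (if i = k then - (\<Sum>t<d. G $$ (k,t) * f t) / complex_of_real A else 0))" for f
    proof -
      define z where "z = (\<Sum>t<d. G $$ (k,t) * f t)"
      have AA: "complex_of_real A = complex_of_real r * complex_of_real r" by (simp add: rr[symmetric])
      have "qf d G' f = qf d G f - (\<Sum>s<d. cnj (f s) * w s) * (\<Sum>t<d. cnj (w t) * f t)"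
        unfolding G'_def by (rule qf_sub_rank1)
      also have "(\<Sum>t<d. cnj (w t) * f t) = z / complex_of_real r"
        unfolding w_def z_def by (rule sums1[OF herm kd])
      also have "(\<Sum>s<d. cnj (f s) * w s) = cnj z / complex_of_real r"
        unfolding w_def z_def by (rule sums2[OF herm kd])
      also have "cnj z / complex_of_real r * (z / complex_of_real r) = cnj z * z / complex_of_real A"
        unfolding AA by simp
      also have "qf d G f - cnj z * z / complex_of_real A = qf d G f + (- z / complex_of_real A) * cnj z + cnj (- z / complex_of_real A) * z
          + cnj (- z / complex_of_real A) * complex_of_real A * (- z / complex_of_real A)"
        by (rule alg1[OF Apos])
      also have "\<dots> = qf d G (\<lambda>i. f i + (if i = k then - z / complex_of_real A else 0))"
        unfolding z_def GA[symmetric] by (rule qf_shift[symmetric, OF herm kd])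
      finally show ?thesis unfolding z_def .
    qed
    have psdG': "psd d G'" unfolding psd_iff using G'c qfG' Suc(4) unfolding psd_iff by simp
    obtain ws where ws: "G' = msum d d (\<lambda>l. outer d (ws l)) {Suc k..<d}"
    proof -
      have "n = d - Suc k" using Suc(2) by arith
      thus ?thesis using that Suc(1)[of "Suc k" G'] kd psdG' z' by auto
    qed
    let ?ws = "ws(k := w)"
    have "msum d d (\<lambda>l. outer d (?ws l)) {k..<d} = outer d (?ws k) + msum d d (\<lambda>l. outer d (?ws l)) {Suc k..<d}"
      by (rule msum_insert_k[OF kd]) simp
    also have "?ws k = w" by simp
    also have "msum d d (\<lambda>l. outer d (?ws l)) {Suc k..<d} = G'"
      unfolding ws by (intro eq_matI) auto
    also have "outer d w + G' = G" using Gc by (intro eq_matI) (auto simp: G'_def)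
    finally show ?thesis by (intro exI[where x="?ws"]) simp
  qed
qed

lemma psd_decomp: assumes "psd d G" shows "\<exists>ws. G = msum d d (\<lambda>l. outer d (ws l)) {..<d}"
  using chol[of 0 d G] assms by (simp add: atLeast0LessThan)


lemma mtr_outer: assumes "X \<in> carrier_mat d d" shows "mtr (X * outer d v) = qf d X v"
  using assms unfolding qf_def by (simp add: mtr_mult[of _ d d] mult.commute mult.left_commute)

lemma mtr_outer_self: "mtr (outer d v) = (\<Sum>u<d. v u * cnj (v u))"
  by (simp add: mtr_def)

lemma density_outer: assumes "(\<Sum>u<d. v u * cnj (v u)) = 1" shows "density d (outer d v)"
  using assms psd_outer unfolding density_def mtr_outer_self by simp

lemma trace_det: assumes X: "X \<in> carrier_mat d d" and Y: "Y \<in> carrier_mat d d"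
  and H: "\<And>\<rho>. density d \<rho> \<Longrightarrow> mtr (X * \<rho>) = mtr (Y * \<rho>)"
  shows "X = Y"
proof -
  have Q: "qf d X v = qf d Y v" if "(\<Sum>u<d. v u * cnj (v u)) = 1" for v
    using H[OF density_outer[OF that]] mtr_outer[OF X] mtr_outer[OF Y] by simp
  have diag: "X $$ (s,s) = Y $$ (s,s)" if "s < d" for s
  proof -
    have "(\<Sum>u<d. (if u = s then 1 else 0) * cnj (if u = s then 1 else 0 :: complex)) = 1"
      using that by (subst sum.mono_neutral_right[of "{..<d}" "{s}"]) auto
    from Q[OF this] show ?thesis using qf_one[OF that] by simp
  qed
  define a where "a = complex_of_real (1 / sqrt 2)"
  have r2: "(1 / sqrt 2) * (1 / sqrt 2) = (1/2::real)" by simp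
  have "a * a = complex_of_real ((1 / sqrt 2) * (1 / sqrt 2))" unfolding a_def by (simp only: of_real_mult)
  hence aa1: "a * a = 1/2" unfolding r2 by simp
  have aa: "a * a = 1/2" "cnj a = a" using aa1 unfolding a_def by simp_all
  have off: "X $$ (s,t) = Y $$ (s,t)" if st: "s < d" "t < d" "s \<noteq> t" for s t
  proof -
    have n1: "(\<Sum>u<d. (if u = s then a else if u = t then a else 0) * cnj (if u = s then a else if u = t then a else 0)) = 1"
      using st by (subst sum_two_supp[of _ s t]) (auto simp: aa)
    have n2: "(\<Sum>u<d. (if u = s then a else if u = t then \<i> * a else 0) * cnj (if u = s then a else if u = t then \<i> * a else 0)) = 1"
      using st by (subst sum_two_supp[of _ s t]) (auto simp: aa algebra_simps)
    have e1: "a * a * (X $$ (s,s) + X $$ (s,t) + X $$ (t,s) + X $$ (t,t)) = a * a * (Y $$ (s,s) + Y $$ (s,t) + Y $$ (t,s) + Y $$ (t,t))"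
      using Q[OF n1] unfolding qf_two[OF st] aa(2) by (simp add: algebra_simps)
    have e2: "a * a * (X $$ (s,s) + \<i> * X $$ (s,t) - \<i> * X $$ (t,s) + X $$ (t,t)) = a * a * (Y $$ (s,s) + \<i> * Y $$ (s,t) - \<i> * Y $$ (t,s) + Y $$ (t,t))"
      using Q[OF n2] unfolding qf_two[OF st] aa(2) by (simp add: aa(2) algebra_simps)
    have "a * a * (X $$ (s,t) + X $$ (t,s)) = a * a * (Y $$ (s,t) + Y $$ (t,s))"
      using e1 diag[OF st(1)] diag[OF st(2)] by (simp add: algebra_simps)
    moreover have nz: "a * a \<noteq> 0" unfolding aa(1) by simp
    ultimately have s1: "X $$ (s,t) + X $$ (t,s) = Y $$ (s,t) + Y $$ (t,s)" using mult_left_cancel[OF nz] by blast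
    have "a * a * (\<i> * (X $$ (s,t) - X $$ (t,s))) = a * a * (\<i> * (Y $$ (s,t) - Y $$ (t,s)))"
      using e2 diag[OF st(1)] diag[OF st(2)] by (simp add: algebra_simps)
    hence s2: "\<i> * (X $$ (s,t) - X $$ (t,s)) = \<i> * (Y $$ (s,t) - Y $$ (t,s))" using mult_left_cancel[OF nz] by blast
    hence s2': "X $$ (s,t) - X $$ (t,s) = Y $$ (s,t) - Y $$ (t,s)" by simp
    have "Re (X $$ (s,t)) = Re (Y $$ (s,t))" using arg_cong[OF s1, of Re] arg_cong[OF s2', of Re] by simp
    moreover have "Im (X $$ (s,t)) = Im (Y $$ (s,t))" using arg_cong[OF s1, of Im] arg_cong[OF s2', of Im] by simp
    ultimately show ?thesis by (simp add: complex_eq_iff)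
  qed
  show ?thesis
  proof (rule eq_matI)
    fix s t assume "s < dim_row Y" "t < dim_col Y"
    thus "X $$ (s,t) = Y $$ (s,t)" using X Y diag off by (cases "s = t") auto
  qed (use X Y in auto)
qed


definition Vm :: "nat \<Rightarrow> nat \<Rightarrow> (nat \<Rightarrow> complex) \<Rightarrow> complex mat" where
  "Vm dQ dK w = mat dQ (dQ * dK) (\<lambda>(u,a). if u = a div dK then cnj (w (a mod dK)) else 0)"

lemma Vm_carrier[simp]: "Vm dQ dK w \<in> carrier_mat dQ (dQ * dK)" by (simp add: Vm_def)
lemma Vm_dim[simp]: "dim_row (Vm dQ dK w) = dQ" "dim_col (Vm dQ dK w) = dQ * dK" by (simp_all add: Vm_def)

lemma Vm_adj_index: assumes "a < dQ * dK" "u < dQ"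
  shows "mat_adjoint (Vm dQ dK w) $$ (a,u) = (if u = a div dK then w (a mod dK) else 0)"
  using assms by (simp add: Vm_def)

lemma div_lt: "(a::nat) < n * k \<Longrightarrow> a div k < n"
  by (simp add: less_mult_imp_div_less)

lemma V_sandwich: assumes M: "M \<in> carrier_mat dQ dQ"
  shows "mat_adjoint (Vm dQ dK w) * M * Vm dQ dK w = kron M (outer dK w)"
proof (rule eq_matI)
  fix a b assume "a < dim_row (kron M (outer dK w))" "b < dim_col (kron M (outer dK w))"
  hence a: "a < dQ * dK" and b: "b < dQ * dK" using M by auto
  have ad: "a div dK < dQ" and bd: "b div dK < dQ" using a b div_lt by auto
  have dK: "dK > 0" using a by (cases dK) auto
  have VM: "(mat_adjoint (Vm dQ dK w) * M) $$ (a,u') = w (a mod dK) * M $$ (a div dK, u')" if u': "u' < dQ" for u'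
  proof -
    have "(mat_adjoint (Vm dQ dK w) * M) $$ (a,u') = (\<Sum>u<dQ. (if u = a div dK then w (a mod dK) else 0) * M $$ (u,u'))"
      using a u' M apply (simp add: mult_index)
      apply (intro sum.cong refl)
      apply (auto simp: Vm_def)
      done
    also have "\<dots> = w (a mod dK) * M $$ (a div dK, u')" using ad by (rule sum_delta_l)
    finally show ?thesis .
  qed
  have "(mat_adjoint (Vm dQ dK w) * M * Vm dQ dK w) $$ (a,b) =
      (\<Sum>u'<dQ. (mat_adjoint (Vm dQ dK w) * M) $$ (a,u') * Vm dQ dK w $$ (u',b))"
    using a b M by (simp add: mult_index)
  also have "\<dots> = (\<Sum>u'<dQ. (w (a mod dK) * M $$ (a div dK, u')) * (if u' = b div dK then cnj (w (b mod dK)) else 0))"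
    using b VM by (intro sum.cong refl) (simp add: Vm_def)
  also have "\<dots> = w (a mod dK) * M $$ (a div dK, b div dK) * cnj (w (b mod dK))" using bd by (rule sum_delta_r)
  also have "\<dots> = kron M (outer dK w) $$ (a,b)"
    using a b M dK by (simp add: kron_index)
  finally show "(mat_adjoint (Vm dQ dK w) * M * Vm dQ dK w) $$ (a,b) = kron M (outer dK w) $$ (a,b)" .
qed (use M in auto)

lemma kron_msum_right: assumes M: "M \<in> carrier_mat n n" and f: "\<And>s. s \<in> S \<Longrightarrow> f s \<in> carrier_mat d d"
  shows "kron M (msum d d f S) = msum (n*d) (n*d) (\<lambda>s. kron M (f s)) S"
proof (rule eq_matI)
  fix u v assume "u < dim_row (msum (n*d) (n*d) (\<lambda>s. kron M (f s)) S)" "v < dim_col (msum (n*d) (n*d) (\<lambda>s. kron M (f s)) S)"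
  hence u: "u < n * d" and v: "v < n * d" by auto
  have dp: "d > 0" using u by (cases d) auto
  have "kron M (msum d d f S) $$ (u,v) = M $$ (u div d, v div d) * (\<Sum>s\<in>S. f s $$ (u mod d, v mod d))"
    using u v M dp by (simp add: kron_index)
  also have "\<dots> = (\<Sum>s\<in>S. kron M (f s) $$ (u,v))"
    unfolding sum_distrib_left
  proof (intro sum.cong refl)
    fix s assume "s \<in> S"
    hence fs: "dim_row (f s) = d" "dim_col (f s) = d" using f by auto
    show "M $$ (u div d, v div d) * f s $$ (u mod d, v mod d) = kron M (f s) $$ (u,v)"
      using u v M fs by (simp add: kron_index)
  qed
  finally show "kron M (msum d d f S) $$ (u,v) = msum (n*d) (n*d) (\<lambda>s. kron M (f s)) S $$ (u,v)"
    using u v by simp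
qed (use M in auto)

lemma kron_one: "kron (1\<^sub>m n) (1\<^sub>m d) = 1\<^sub>m (n * d)"
proof (rule eq_matI)
  fix u v assume "u < dim_row (1\<^sub>m (n * d))" "v < dim_col (1\<^sub>m (n * d))"
  hence u: "u < n * d" and v: "v < n * d" by auto
  have dp: "d > 0" using u by (cases d) auto
  have "(u div d = v div d \<and> u mod d = v mod d) = (u = v)" by (metis div_mult_mod_eq)
  thus "kron (1\<^sub>m n) (1\<^sub>m d) $$ (u,v) = 1\<^sub>m (n * d) $$ (u,v)"
    using u v dp div_lt[OF u] div_lt[OF v] by (auto simp: kron_index)
qed auto

lemma sum_shift_k: "sum g {a..<a+k} = (\<Sum>l<k. g (a + (l::nat)))"
  by (induct k) (simp_all add: add.commute)

lemma sum_nat_pair: "(\<Sum>x<n*k. g x) = (\<Sum>m<n. \<Sum>l<k. g (m*k + (l::nat)))"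
  by (simp add: sum.nat_group[symmetric] sum_shift_k)

lemma mtr_sandwich: assumes P: "P \<in> carrier_mat m n" and X: "X \<in> carrier_mat m m" and R: "\<rho> \<in> carrier_mat n n"
  shows "mtr (mat_adjoint P * X * P * \<rho>) = mtr (X * (P * \<rho> * mat_adjoint P))"
proof -
  have Ac: "mat_adjoint P \<in> carrier_mat n m" using P by (rule adj_carrier)
  have KA: "mat_adjoint P * X \<in> carrier_mat n m" using Ac X by simp
  have Kr: "P * \<rho> \<in> carrier_mat m n" using P R by simp
  have AKr: "X * (P * \<rho>) \<in> carrier_mat m n" using Kr X by simp
  have "mat_adjoint P * X * P * \<rho> = mat_adjoint P * X * (P * \<rho>)"
    by (rule assoc_mult_mat[OF KA P R])
  also have "\<dots> = mat_adjoint P * (X * (P * \<rho>))"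
    by (rule assoc_mult_mat[OF Ac X Kr])
  finally have "mtr (mat_adjoint P * X * P * \<rho>) = mtr (mat_adjoint P * (X * (P * \<rho>)))" by simp
  also have "\<dots> = mtr ((X * (P * \<rho>)) * mat_adjoint P)"
    by (rule mtr_cyc[OF Ac AKr])
  also have "(X * (P * \<rho>)) * mat_adjoint P = X * (P * \<rho> * mat_adjoint P)"
    by (rule assoc_mult_mat[OF X Kr Ac])
  finally show ?thesis .
qed

lemma B_sandwich: assumes A: "A \<in> carrier_mat (dQ * dK) dQ'" and M: "M \<in> carrier_mat dQ dQ"
  shows "mat_adjoint (Vm dQ dK w * A) * M * (Vm dQ dK w * A) = mat_adjoint A * kron M (outer dK w) * A"
proof -
  let ?V = "Vm dQ dK w"
  have V: "?V \<in> carrier_mat dQ (dQ * dK)" by simp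
  have Vh: "mat_adjoint ?V \<in> carrier_mat (dQ * dK) dQ" using V by (rule adj_carrier)
  have Ah: "mat_adjoint A \<in> carrier_mat dQ' (dQ * dK)" using A by (rule adj_carrier)
  have VhM: "mat_adjoint ?V * M \<in> carrier_mat (dQ * dK) dQ" using Vh M by simp
  have VA: "?V * A \<in> carrier_mat dQ dQ'" using mult_carrier_mat[OF V A] .
  have VhMV: "mat_adjoint ?V * M * ?V \<in> carrier_mat (dQ * dK) (dQ * dK)" using VhM V by simp
  have "mat_adjoint (?V * A) * M * (?V * A) = mat_adjoint A * mat_adjoint ?V * M * (?V * A)"
    by (simp add: adj_mult[OF V A])
  also have "\<dots> = mat_adjoint A * (mat_adjoint ?V * M) * (?V * A)"
    by (simp add: assoc_mult_mat[OF Ah Vh M])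
  also have "\<dots> = mat_adjoint A * ((mat_adjoint ?V * M) * (?V * A))"
    by (rule assoc_mult_mat[OF Ah VhM VA])
  also have "(mat_adjoint ?V * M) * (?V * A) = (mat_adjoint ?V * M * ?V) * A"
    by (rule assoc_mult_mat[OF VhM V A, symmetric])
  also have "mat_adjoint A * ((mat_adjoint ?V * M * ?V) * A) = mat_adjoint A * (mat_adjoint ?V * M * ?V) * A"
    by (rule assoc_mult_mat[OF Ah VhMV A, symmetric])
  also have "mat_adjoint ?V * M * ?V = kron M (outer dK w)" by (rule V_sandwich[OF M])
  finally show ?thesis .
qed


lemma msum_cong: "(\<And>s. s \<in> S \<Longrightarrow> f s = g s) \<Longrightarrow> msum d1 d2 f S = msum d1 d2 g S"
  unfolding msum_def by (intro eq_matI) (auto intro!: sum.cong)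

lemma trace_key:
  assumes Ak: "\<And>k. k < nK \<Longrightarrow> Ak k \<in> carrier_mat (dQ*dK) dQ'" and M: "M \<in> carrier_mat dQ dQ"
    and R: "\<rho> \<in> carrier_mat dQ' dQ'"
  shows "mtr (msum dQ' dQ' (\<lambda>k'. mat_adjoint (Vm dQ dK (w (k' mod dK)) * Ak (k' div dK)) * M *
            (Vm dQ dK (w (k' mod dK)) * Ak (k' div dK))) {..<nK*dK} * \<rho>)
   = mtr (kron M (msum dK dK (\<lambda>l. outer dK (w l)) {..<dK}) *
          msum (dQ*dK) (dQ*dK) (\<lambda>k. Ak k * \<rho> * mat_adjoint (Ak k)) {..<nK})"
proof -
  define B where "B = (\<lambda>k'. Vm dQ dK (w (k' mod dK)) * Ak (k' div dK))"
  define F where "F = msum dK dK (\<lambda>l. outer dK (w l)) {..<dK}"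
  have Bc: "B k' \<in> carrier_mat dQ dQ'" if "k' < nK * dK" for k'
    unfolding B_def using Ak[OF div_lt[OF that]] by (intro mult_carrier_mat[of _ dQ "dQ*dK"]) auto
  have BMB: "mat_adjoint (B k') * M * B k' \<in> carrier_mat dQ' dQ'" if "k' < nK * dK" for k'
    using mult_carrier_mat[OF mult_carrier_mat[OF adj_carrier[OF Bc[OF that]] M] Bc[OF that]] .
  have Ahc: "mat_adjoint (Ak k) \<in> carrier_mat dQ' (dQ*dK)" if "k < nK" for k using adj_carrier[OF Ak[OF that]] .
  have KMc: "kron M (outer dK (w l)) \<in> carrier_mat (dQ*dK) (dQ*dK)" for l using M by (intro carrier_matI) auto
  have AKA: "mat_adjoint (Ak k) * kron M (outer dK (w l)) * Ak k \<in> carrier_mat dQ' dQ'" if "k < nK" for k l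
    using mult_carrier_mat[OF mult_carrier_mat[OF Ahc[OF that] KMc] Ak[OF that]] .
  have ARA: "Ak k * \<rho> * mat_adjoint (Ak k) \<in> carrier_mat (dQ*dK) (dQ*dK)" if "k < nK" for k
    using mult_carrier_mat[OF mult_carrier_mat[OF Ak[OF that] R] Ahc[OF that]] .
  have KFc: "kron M F \<in> carrier_mat (dQ*dK) (dQ*dK)" using M unfolding F_def by (intro carrier_matI) auto
  have "mtr (msum dQ' dQ' (\<lambda>k'. mat_adjoint (B k') * M * B k') {..<nK*dK} * \<rho>)
      = (\<Sum>k'<nK*dK. mtr (mat_adjoint (B k') * M * B k' * \<rho>))"
    using R BMB by (intro mtr_msum_left1) auto
  also have "\<dots> = (\<Sum>k<nK. \<Sum>l<dK. mtr (mat_adjoint (B (k*dK+l)) * M * B (k*dK+l) * \<rho>))"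
    by (rule sum_nat_pair)
  also have "\<dots> = (\<Sum>k<nK. \<Sum>l<dK. mtr (mat_adjoint (Ak k) * kron M (outer dK (w l)) * Ak k * \<rho>))"
  proof (intro sum.cong refl)
    fix k l assume k: "k \<in> {..<nK}" and l: "l \<in> {..<dK}"
    have "B (k*dK+l) = Vm dQ dK (w l) * Ak k" unfolding B_def using l by simp
    thus "mtr (mat_adjoint (B (k*dK+l)) * M * B (k*dK+l) * \<rho>) = mtr (mat_adjoint (Ak k) * kron M (outer dK (w l)) * Ak k * \<rho>)"
      using B_sandwich[OF Ak[of k] M, of "w l"] k by simp
  qed
  also have "\<dots> = (\<Sum>k<nK. mtr (msum dQ' dQ' (\<lambda>l. mat_adjoint (Ak k) * kron M (outer dK (w l)) * Ak k) {..<dK} * \<rho>))"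
  proof (intro sum.cong refl)
    fix k assume k: "k \<in> {..<nK}"
    show "(\<Sum>l<dK. mtr (mat_adjoint (Ak k) * kron M (outer dK (w l)) * Ak k * \<rho>)) =
        mtr (msum dQ' dQ' (\<lambda>l. mat_adjoint (Ak k) * kron M (outer dK (w l)) * Ak k) {..<dK} * \<rho>)"
      using R AKA k by (intro mtr_msum_left1[symmetric]) auto
  qed
  also have "\<dots> = (\<Sum>k<nK. mtr (mat_adjoint (Ak k) * kron M F * Ak k * \<rho>))"
  proof (intro sum.cong refl)
    fix k assume k: "k \<in> {..<nK}"
    have "msum dQ' dQ' (\<lambda>l. mat_adjoint (Ak k) * kron M (outer dK (w l)) * Ak k) {..<dK}
        = mat_adjoint (Ak k) * msum (dQ*dK) (dQ*dK) (\<lambda>l. kron M (outer dK (w l))) {..<dK} * Ak k"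
      using Ahc[of k] Ak[of k] k KMc by (intro msum_sandwich) auto
    also have "msum (dQ*dK) (dQ*dK) (\<lambda>l. kron M (outer dK (w l))) {..<dK} = kron M F"
      unfolding F_def using M by (intro kron_msum_right[symmetric]) auto
    finally show "mtr (msum dQ' dQ' (\<lambda>l. mat_adjoint (Ak k) * kron M (outer dK (w l)) * Ak k) {..<dK} * \<rho>) =
        mtr (mat_adjoint (Ak k) * kron M F * Ak k * \<rho>)" by simp
  qed
  also have "\<dots> = (\<Sum>k<nK. mtr (kron M F * (Ak k * \<rho> * mat_adjoint (Ak k))))"
  proof (intro sum.cong refl)
    fix k assume "k \<in> {..<nK}"
    thus "mtr (mat_adjoint (Ak k) * kron M F * Ak k * \<rho>) = mtr (kron M F * (Ak k * \<rho> * mat_adjoint (Ak k)))"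
      using Ak KFc R by (intro mtr_sandwich) auto
  qed
  also have "\<dots> = mtr (kron M F * msum (dQ*dK) (dQ*dK) (\<lambda>k. Ak k * \<rho> * mat_adjoint (Ak k)) {..<nK})"
    using KFc ARA by (intro mtr_msum_right[symmetric]) auto
  finally show ?thesis unfolding B_def F_def .
qed


lemma inst_B:
  assumes inst: "instrument dQ' (dQ*dK) nI nK Af"
    and F: "\<And>i j. i < nI \<Longrightarrow> j < nJ \<Longrightarrow> F i j = msum dK dK (\<lambda>l. outer dK (W i j l)) {..<dK}"
    and pv: "\<And>i. i < nI \<Longrightarrow> povm dK (F i) {..<nJ}"
  shows "instrument dQ' dQ (nI*nJ) (nK*dK)
     (\<lambda>i' k'. Vm dQ dK (W (i' div nJ) (i' mod nJ) (k' mod dK)) * Af (i' div nJ) (k' div dK))"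
proof -
  define B where "B = (\<lambda>i' k'. Vm dQ dK (W (i' div nJ) (i' mod nJ) (k' mod dK)) * Af (i' div nJ) (k' div dK))"
  have Ac: "Af i k \<in> carrier_mat (dQ*dK) dQ'" if "i < nI" "k < nK" for i k
    using inst that unfolding instrument_def by blast
  have sumA: "msum dQ' dQ' (\<lambda>(i,k). mat_adjoint (Af i k) * Af i k) ({..<nI} \<times> {..<nK}) = 1\<^sub>m dQ'"
    using inst unfolding instrument_def by blast
  have Ahc: "mat_adjoint (Af i k) \<in> carrier_mat dQ' (dQ*dK)" if "i < nI" "k < nK" for i k
    using adj_carrier[OF Ac[OF that]] .
  have Bc: "B i' k' \<in> carrier_mat dQ dQ'" if "i' < nI*nJ" "k' < nK*dK" for i' k'
    unfolding B_def using mult_carrier_mat[OF Vm_carrier Ac[OF div_lt[OF that(1)] div_lt[OF that(2)]]] .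
  have Fc: "F i j \<in> carrier_mat dK dK" if "i < nI" "j < nJ" for i j
    using pv[OF that(1)] that(2) unfolding povm_def psd_def by blast
  have Fsum: "msum dK dK (F i) {..<nJ} = 1\<^sub>m dK" if "i < nI" for i
    using pv[OF that] unfolding povm_def by blast
  have one: "1\<^sub>m dQ \<in> carrier_mat dQ dQ" by simp
  have K1c: "kron (1\<^sub>m dQ) X \<in> carrier_mat (dQ*dK) (dQ*dK)" if "X \<in> carrier_mat dK dK" for X
    using that by (intro carrier_matI) auto
  have per: "msum dQ' dQ' (\<lambda>j. msum dQ' dQ' (\<lambda>l. mat_adjoint (B (i*nJ+j) (k*dK+l)) * B (i*nJ+j) (k*dK+l)) {..<dK}) {..<nJ}
       = mat_adjoint (Af i k) * Af i k" if ik: "i < nI" "k < nK" for i k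
  proof -
    have inner: "msum dQ' dQ' (\<lambda>l. mat_adjoint (B (i*nJ+j) (k*dK+l)) * B (i*nJ+j) (k*dK+l)) {..<dK}
        = mat_adjoint (Af i k) * kron (1\<^sub>m dQ) (F i j) * Af i k" if j: "j < nJ" for j
    proof -
      have "msum dQ' dQ' (\<lambda>l. mat_adjoint (B (i*nJ+j) (k*dK+l)) * B (i*nJ+j) (k*dK+l)) {..<dK}
          = msum dQ' dQ' (\<lambda>l. mat_adjoint (Af i k) * kron (1\<^sub>m dQ) (outer dK (W i j l)) * Af i k) {..<dK}"
      proof (rule msum_cong)
        fix l assume l: "l \<in> {..<dK}"
        have Be: "B (i*nJ+j) (k*dK+l) = Vm dQ dK (W i j l) * Af i k" unfolding B_def using j l by simp
        have Bhc: "mat_adjoint (B (i*nJ+j) (k*dK+l)) \<in> carrier_mat dQ' dQ"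
          unfolding Be using adj_carrier[OF mult_carrier_mat[OF Vm_carrier Ac[OF ik]]] .
        have "mat_adjoint (B (i*nJ+j) (k*dK+l)) * B (i*nJ+j) (k*dK+l) = mat_adjoint (B (i*nJ+j) (k*dK+l)) * 1\<^sub>m dQ * B (i*nJ+j) (k*dK+l)"
          unfolding right_mult_one_mat[OF Bhc] ..
        also have "\<dots> = mat_adjoint (Af i k) * kron (1\<^sub>m dQ) (outer dK (W i j l)) * Af i k"
          unfolding Be by (rule B_sandwich[OF Ac[OF ik] one])
        finally show "mat_adjoint (B (i*nJ+j) (k*dK+l)) * B (i*nJ+j) (k*dK+l) = mat_adjoint (Af i k) * kron (1\<^sub>m dQ) (outer dK (W i j l)) * Af i k" .
      qed
      also have "\<dots> = mat_adjoint (Af i k) * msum (dQ*dK) (dQ*dK) (\<lambda>l. kron (1\<^sub>m dQ) (outer dK (W i j l))) {..<dK} * Af i k"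
        using Ahc[OF ik] Ac[OF ik] K1c by (intro msum_sandwich) auto
      also have "msum (dQ*dK) (dQ*dK) (\<lambda>l. kron (1\<^sub>m dQ) (outer dK (W i j l))) {..<dK} = kron (1\<^sub>m dQ) (F i j)"
        unfolding F[OF ik(1) j] by (intro kron_msum_right[symmetric]) auto
      finally show ?thesis .
    qed
    have "msum dQ' dQ' (\<lambda>j. msum dQ' dQ' (\<lambda>l. mat_adjoint (B (i*nJ+j) (k*dK+l)) * B (i*nJ+j) (k*dK+l)) {..<dK}) {..<nJ}
        = msum dQ' dQ' (\<lambda>j. mat_adjoint (Af i k) * kron (1\<^sub>m dQ) (F i j) * Af i k) {..<nJ}"
      using inner by (intro msum_cong) auto
    also have "\<dots> = mat_adjoint (Af i k) * msum (dQ*dK) (dQ*dK) (\<lambda>j. kron (1\<^sub>m dQ) (F i j)) {..<nJ} * Af i k"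
      using Ahc[OF ik] Ac[OF ik] K1c Fc[OF ik(1)] by (intro msum_sandwich) auto
    also have "msum (dQ*dK) (dQ*dK) (\<lambda>j. kron (1\<^sub>m dQ) (F i j)) {..<nJ} = kron (1\<^sub>m dQ) (msum dK dK (F i) {..<nJ})"
      using Fc[OF ik(1)] by (intro kron_msum_right[symmetric]) auto
    also have "\<dots> = 1\<^sub>m (dQ*dK)" unfolding Fsum[OF ik(1)] by (rule kron_one)
    also have "mat_adjoint (Af i k) * 1\<^sub>m (dQ*dK) = mat_adjoint (Af i k)" by (rule right_mult_one_mat[OF Ahc[OF ik]])
    finally show ?thesis .
  qed
  have main: "msum dQ' dQ' (\<lambda>(i',k'). mat_adjoint (B i' k') * B i' k') ({..<nI*nJ} \<times> {..<nK*dK}) = 1\<^sub>m dQ'"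
  proof (rule eq_matI)
    fix u v assume "u < dim_row (1\<^sub>m dQ')" "v < dim_col (1\<^sub>m dQ')"
    hence u: "u < dQ'" and v: "v < dQ'" by auto
    have "msum dQ' dQ' (\<lambda>(i',k'). mat_adjoint (B i' k') * B i' k') ({..<nI*nJ} \<times> {..<nK*dK}) $$ (u,v)
       = (\<Sum>i'<nI*nJ. \<Sum>k'<nK*dK. (mat_adjoint (B i' k') * B i' k') $$ (u,v))"
      using u v by (simp add: sum.cartesian_product')
    also have "\<dots> = (\<Sum>i<nI. \<Sum>j<nJ. \<Sum>k<nK. \<Sum>l<dK. (mat_adjoint (B (i*nJ+j) (k*dK+l)) * B (i*nJ+j) (k*dK+l)) $$ (u,v))"
      by (simp add: sum_nat_pair)
    also have "\<dots> = (\<Sum>i<nI. \<Sum>k<nK. \<Sum>j<nJ. \<Sum>l<dK. (mat_adjoint (B (i*nJ+j) (k*dK+l)) * B (i*nJ+j) (k*dK+l)) $$ (u,v))"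
      by (rule sum.cong[OF refl], rule sum.swap)
    also have "\<dots> = (\<Sum>i<nI. \<Sum>k<nK. (mat_adjoint (Af i k) * Af i k) $$ (u,v))"
    proof (intro sum.cong refl)
      fix i k assume ik: "i \<in> {..<nI}" "k \<in> {..<nK}"
      have "(\<Sum>j<nJ. \<Sum>l<dK. (mat_adjoint (B (i*nJ+j) (k*dK+l)) * B (i*nJ+j) (k*dK+l)) $$ (u,v)) =
          msum dQ' dQ' (\<lambda>j. msum dQ' dQ' (\<lambda>l. mat_adjoint (B (i*nJ+j) (k*dK+l)) * B (i*nJ+j) (k*dK+l)) {..<dK}) {..<nJ} $$ (u,v)"
        using u v by simp
      also have "\<dots> = (mat_adjoint (Af i k) * Af i k) $$ (u,v)" using per ik by simp
      finally show "(\<Sum>j<nJ. \<Sum>l<dK. (mat_adjoint (B (i*nJ+j) (k*dK+l)) * B (i*nJ+j) (k*dK+l)) $$ (u,v)) =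
          (mat_adjoint (Af i k) * Af i k) $$ (u,v)" .
    qed
    also have "\<dots> = msum dQ' dQ' (\<lambda>(i,k). mat_adjoint (Af i k) * Af i k) ({..<nI} \<times> {..<nK}) $$ (u,v)"
      using u v by (simp add: sum.cartesian_product')
    also have "\<dots> = 1\<^sub>m dQ' $$ (u,v)" unfolding sumA ..
    finally show "msum dQ' dQ' (\<lambda>(i',k'). mat_adjoint (B i' k') * B i' k') ({..<nI*nJ} \<times> {..<nK*dK}) $$ (u,v) = 1\<^sub>m dQ' $$ (u,v)" .
  qed auto
  show ?thesis unfolding instrument_def B_def[symmetric] using Bc main by blast
qed


lemma perm4: "(\<Sum>j\<in>J. \<Sum>x\<in>X. \<Sum>a\<in>Aa. \<Sum>m\<in>Mm. g j x a m) = (\<Sum>m\<in>Mm. \<Sum>x\<in>X. \<Sum>a\<in>Aa. \<Sum>j\<in>J. g j x a m)"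
proof -
  have "(\<Sum>j\<in>J. \<Sum>x\<in>X. \<Sum>a\<in>Aa. \<Sum>m\<in>Mm. g j x a m) = (\<Sum>j\<in>J. \<Sum>m\<in>Mm. \<Sum>x\<in>X. \<Sum>a\<in>Aa. g j x a m)"
    by (rule sum.cong[OF refl], rule sum_rot3)
  also have "\<dots> = (\<Sum>m\<in>Mm. \<Sum>j\<in>J. \<Sum>x\<in>X. \<Sum>a\<in>Aa. g j x a m)" by (rule sum.swap)
  also have "\<dots> = (\<Sum>m\<in>Mm. \<Sum>x\<in>X. \<Sum>a\<in>Aa. \<Sum>j\<in>J. g j x a m)"
    by (rule sum.cong[OF refl], rule sum_rot3[symmetric])
  finally show ?thesis .
qed

lemma pq_lemma:
  fixes p :: "'m \<Rightarrow> real" and qq :: "'m \<Rightarrow> real"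
  assumes fin: "finite S" and nn: "\<And>m. m \<in> S \<Longrightarrow> p m \<ge> 0"
  shows "(\<Sum>m\<in>S. p m) * (if (\<Sum>m\<in>S. p m) = 0 then c else (\<Sum>m\<in>S. p m * qq m) / (\<Sum>m\<in>S. p m))
     = (\<Sum>m\<in>S. p m * qq m)"
proof (cases "(\<Sum>m\<in>S. p m) = 0")
  case True
  hence "\<forall>m\<in>S. p m = 0" using sum_nonneg_eq_0_iff[OF fin] nn by blast
  thus ?thesis using True by simp
qed simp

lemma dm_div: "j < (n::nat) \<Longrightarrow> (i*n+j) div n = i" by simp
lemma dm_mod: "j < (n::nat) \<Longrightarrow> (i*n+j) mod n = j" by simp

lemma dir2:
  fixes M :: "'x::finite \<Rightarrow> 'a::finite \<Rightarrow> complex mat" and N :: "'y::finite \<Rightarrow> 'b::finite \<Rightarrow> complex mat"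
  assumes pM: "pmd dQ M" and pN: "pmd dQ' N" and conv: "oneway_LOCC_convertible dQ M dQ' N"
  shows "pmd_succeq dQ M dQ' N"
proof -
  obtain nR nI nK dK nm nJ :: nat and \<mu> :: "nat \<Rightarrow> real" and A :: "nat \<Rightarrow> nat \<Rightarrow> nat \<Rightarrow> complex mat"
    and p :: "nat \<Rightarrow> 'y \<Rightarrow> nat \<Rightarrow> nat \<times> 'x \<Rightarrow> real" and F :: "nat \<Rightarrow> nat \<Rightarrow> nat \<Rightarrow> complex mat"
    and q :: "'a \<Rightarrow> 'x \<Rightarrow> nat \<Rightarrow> nat \<Rightarrow> nat \<Rightarrow> 'y \<Rightarrow> nat \<Rightarrow> 'b \<Rightarrow> real"
    where mu: "distr \<mu> {..<nR}" and instA: "\<forall>r<nR. instrument dQ' (dQ * dK) nI nK (A r)"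
      and pd: "\<forall>i<nI. \<forall>y. \<forall>r<nR. distr (p i y r) ({..<nm} \<times> UNIV)"
      and Fp: "\<forall>r<nR. \<forall>i<nI. povm dK (F r i) {..<nJ}"
      and qd: "\<forall>a x. \<forall>m<nm. \<forall>j<nJ. \<forall>i<nI. \<forall>y. \<forall>r<nR. distr (q a x m j i y r) UNIV"
      and tr: "\<forall>\<rho>. density dQ' \<rho> \<longrightarrow> (\<forall>y b.
         mtr (N y b * \<rho>) =
         (\<Sum>(r,i,(m,x),a,j) \<in> {..<nR} \<times> {..<nI} \<times> ({..<nm} \<times> UNIV) \<times> UNIV \<times> {..<nJ}.
            complex_of_real (\<mu> r * p i y r (m,x) * q a x m j i y r b) *
            mtr (kron (M x a) (F r i j) * kraus_apply (dQ * dK) (A r) nK i \<rho>)))"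
    using conv unfolding oneway_LOCC_convertible_def apply (elim exE conjE) apply (rule that) apply assumption+ done
  define W where "W = (\<lambda>r i j. SOME ws. F r i j = msum dK dK (\<lambda>l. outer dK (ws l)) {..<dK})"
  have WF: "F r i j = msum dK dK (\<lambda>l. outer dK (W r i j l)) {..<dK}" if "r < nR" "i < nI" "j < nJ" for r i j
  proof -
    have "psd dK (F r i j)" using Fp that unfolding povm_def by blast
    from psd_decomp[OF this] show ?thesis unfolding W_def by (rule someI_ex)
  qed
  define K where "K = (\<lambda>r i' k'. Vm dQ dK (W r (i' div nJ) (i' mod nJ) (k' mod dK)) * A r (i' div nJ) (k' div dK))"
  define p' where "p' = (\<lambda>i' y r x. \<Sum>m<nm. p (i' div nJ) y r (m,x))"
  define q' where "q' = (\<lambda>a x i' y r b. if p' i' y r x = 0 then 1 / real (card (UNIV :: 'b set))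
      else (\<Sum>m<nm. p (i' div nJ) y r (m,x) * q a x m (i' mod nJ) (i' div nJ) y r b) / p' i' y r x)"
  have Ac: "A r i k \<in> carrier_mat (dQ*dK) dQ'" if "r < nR" "i < nI" "k < nK" for r i k
    using instA that unfolding instrument_def by blast
  have Mc: "\<And>x a. M x a \<in> carrier_mat dQ dQ" using pM by (rule pmd_carrier)
  have instK: "\<forall>r<nR. instrument dQ' dQ (nI*nJ) (nK*dK) (K r)"
  proof (intro allI impI)
    fix r assume r: "r < nR"
    show "instrument dQ' dQ (nI*nJ) (nK*dK) (K r)" unfolding K_def
      by (rule inst_B[where F="F r" and W="W r"]) (use instA r WF Fp in auto)
  qed
  have pdist: "\<forall>i'<nI*nJ. \<forall>y. \<forall>r<nR. distr (p' i' y r) UNIV"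
  proof (intro allI impI)
    fix i' y r assume i': "i' < nI*nJ" and r: "r < nR"
    have i: "i' div nJ < nI" using div_lt[OF i'] .
    have D: "distr (p (i' div nJ) y r) ({..<nm} \<times> UNIV)" using pd i r by blast
    have nn: "\<forall>m<nm. \<forall>x. p (i' div nJ) y r (m,x) \<ge> 0" using D unfolding distr_def by auto
    have s1: "(\<Sum>m<nm. \<Sum>x\<in>UNIV. p (i' div nJ) y r (m,x)) = 1" using D unfolding distr_def
      by (simp add: sum.cartesian_product')
    show "distr (p' i' y r) UNIV" unfolding distr_def p'_def
      using nn s1 by (auto intro!: sum_nonneg simp: sum.swap[of _ UNIV])
  qed
  have qdist: "\<forall>a x. \<forall>i'<nI*nJ. \<forall>y. \<forall>r<nR. distr (q' a x i' y r) UNIV"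
  proof (intro allI impI)
    fix a x i' y r assume i': "i' < nI*nJ" and r: "r < nR"
    have i: "i' div nJ < nI" using div_lt[OF i'] .
    have nJp: "nJ > 0" using i' by (cases nJ) auto
    have j: "i' mod nJ < nJ" using nJp by simp
    have D: "distr (p (i' div nJ) y r) ({..<nm} \<times> UNIV)" using pd i r by blast
    have nn: "\<And>m. m < nm \<Longrightarrow> p (i' div nJ) y r (m,x) \<ge> 0" using D unfolding distr_def by auto
    have Dq: "\<And>m. m < nm \<Longrightarrow> distr (q a x m (i' mod nJ) (i' div nJ) y r) UNIV" using qd i r j by blast
    show "distr (q' a x i' y r) UNIV"
    proof (cases "p' i' y r x = 0")
      case True
      have cp: "real (card (UNIV :: 'b set)) > 0" using card_gt_0_iff[of "UNIV :: 'b set"] by simp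
      show ?thesis unfolding distr_def q'_def using True cp by simp
    next
      case False
      have pp: "p' i' y r x > 0" using False nn unfolding p'_def
        by (metis (no_types, lifting) lessThan_iff order_less_le sum_nonneg)
      have qn: "\<And>m b. m < nm \<Longrightarrow> q a x m (i' mod nJ) (i' div nJ) y r b \<ge> 0" using Dq unfolding distr_def by blast
      have qs: "\<And>m. m < nm \<Longrightarrow> (\<Sum>b\<in>UNIV. q a x m (i' mod nJ) (i' div nJ) y r b) = 1" using Dq unfolding distr_def by blast
      have "(\<Sum>b\<in>UNIV. \<Sum>m<nm. p (i' div nJ) y r (m,x) * q a x m (i' mod nJ) (i' div nJ) y r b)
          = (\<Sum>m<nm. p (i' div nJ) y r (m,x) * (\<Sum>b\<in>UNIV. q a x m (i' mod nJ) (i' div nJ) y r b))"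
        by (subst sum.swap) (simp add: sum_distrib_left)
      also have "\<dots> = p' i' y r x" unfolding p'_def using qs by (intro sum.cong refl) auto
      finally have S: "(\<Sum>b\<in>UNIV. \<Sum>m<nm. p (i' div nJ) y r (m,x) * q a x m (i' mod nJ) (i' div nJ) y r b) = p' i' y r x" .
      show ?thesis unfolding distr_def q'_def using False pp S nn qn
        by (auto simp: sum_divide_distrib[symmetric] intro!: divide_nonneg_pos sum_nonneg mult_nonneg_nonneg)
    qed
  qed
  have Neq: "N y b = msum dQ' dQ'
          (\<lambda>(r,i,x,a). complex_of_real (\<mu> r * p' i y r x * q' a x i y r b) \<cdot>\<^sub>m
                         kraus_adj dQ' (K r) (nK*dK) i (M x a))
          ({..<nR} \<times> {..<nI*nJ} \<times> UNIV \<times> UNIV)" for y b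
  proof (rule trace_det[of _ dQ'])
    show "N y b \<in> carrier_mat dQ' dQ'" using pN by (rule pmd_carrier)
    show "msum dQ' dQ' (\<lambda>(r,i,x,a). complex_of_real (\<mu> r * p' i y r x * q' a x i y r b) \<cdot>\<^sub>m
                         kraus_adj dQ' (K r) (nK*dK) i (M x a)) ({..<nR} \<times> {..<nI*nJ} \<times> UNIV \<times> UNIV) \<in> carrier_mat dQ' dQ'"
      by simp
    fix \<rho> assume rho: "density dQ' \<rho>"
    have rc: "\<rho> \<in> carrier_mat dQ' dQ'" using rho unfolding density_def psd_def by simp
    define T where "T = (\<lambda>r i j x a. mtr (kron (M x a) (F r i j) * kraus_apply (dQ * dK) (A r) nK i \<rho>))"
    have key: "mtr (kraus_adj dQ' (K r) (nK*dK) (i*nJ+j) (M x a) * \<rho>) = T r i j x a"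
      if r: "r < nR" and i: "i < nI" and j: "j < nJ" for r i j x a
    proof -
      have "kraus_adj dQ' (K r) (nK*dK) (i*nJ+j) (M x a) = msum dQ' dQ' (\<lambda>k'. mat_adjoint (Vm dQ dK (W r i j (k' mod dK)) * A r i (k' div dK)) * M x a *
            (Vm dQ dK (W r i j (k' mod dK)) * A r i (k' div dK))) {..<nK*dK}"
        unfolding kraus_adj_def K_def dm_div[OF j] dm_mod[OF j] ..
      hence "mtr (kraus_adj dQ' (K r) (nK*dK) (i*nJ+j) (M x a) * \<rho>) =
          mtr (kron (M x a) (msum dK dK (\<lambda>l. outer dK (W r i j l)) {..<dK}) *
          msum (dQ*dK) (dQ*dK) (\<lambda>k. A r i k * \<rho> * mat_adjoint (A r i k)) {..<nK})"
        using trace_key[of nK "A r i" dQ dK dQ' "M x a" \<rho> "W r i j"] Ac[OF r i] Mc rc by simp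
      thus ?thesis unfolding T_def kraus_apply_def WF[OF r i j, symmetric] .
    qed
    have pq: "complex_of_real (\<mu> r * p' (i*nJ+j) y r x * q' a x (i*nJ+j) y r b) =
       (\<Sum>m<nm. complex_of_real (\<mu> r * p i y r (m,x) * q a x m j i y r b))"
      if r: "r < nR" and i: "i < nI" and j: "j < nJ" for r i j x a
    proof -
      have D: "distr (p i y r) ({..<nm} \<times> UNIV)" using pd i r by blast
      have nn: "\<And>m. m \<in> {..<nm} \<Longrightarrow> p i y r (m,x) \<ge> 0" using D unfolding distr_def by auto
      have "p' (i*nJ+j) y r x * q' a x (i*nJ+j) y r b = (\<Sum>m<nm. p i y r (m,x) * q a x m j i y r b)"
        unfolding q'_def p'_def dm_div[OF j] dm_mod[OF j]
        by (rule pq_lemma[where p="\<lambda>m. p i y r (m,x)" and qq="\<lambda>m. q a x m j i y r b"]) (use nn in auto)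
      hence "\<mu> r * p' (i*nJ+j) y r x * q' a x (i*nJ+j) y r b = (\<Sum>m<nm. \<mu> r * p i y r (m,x) * q a x m j i y r b)"
        by (simp add: sum_distrib_left mult.assoc)
      thus ?thesis by simp
    qed
    let ?R = "msum dQ' dQ' (\<lambda>(r,i,x,a). complex_of_real (\<mu> r * p' i y r x * q' a x i y r b) \<cdot>\<^sub>m
                         kraus_adj dQ' (K r) (nK*dK) i (M x a)) ({..<nR} \<times> {..<nI*nJ} \<times> UNIV \<times> UNIV)"
    have "mtr (?R * \<rho>) = (\<Sum>s \<in> {..<nR} \<times> {..<nI*nJ} \<times> UNIV \<times> UNIV.
        mtr ((case s of (r,i,x,a) \<Rightarrow> complex_of_real (\<mu> r * p' i y r x * q' a x i y r b) \<cdot>\<^sub>m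
                         kraus_adj dQ' (K r) (nK*dK) i (M x a)) * \<rho>))"
      by (rule mtr_msum_left1) (use rc in auto)
    also have "\<dots> = (\<Sum>s \<in> {..<nR} \<times> {..<nI*nJ} \<times> UNIV \<times> UNIV.
        (case s of (r,i,x,a) \<Rightarrow> complex_of_real (\<mu> r * p' i y r x * q' a x i y r b) *
            mtr (kraus_adj dQ' (K r) (nK*dK) i (M x a) * \<rho>)))"
      by (intro sum.cong refl) (auto simp: mtr_smult[OF kraus_adj_carrier rc])
    also have "\<dots> = (\<Sum>r<nR. \<Sum>i'<nI*nJ. \<Sum>x\<in>UNIV. \<Sum>a\<in>UNIV. complex_of_real (\<mu> r * p' i' y r x * q' a x i' y r b) *
            mtr (kraus_adj dQ' (K r) (nK*dK) i' (M x a) * \<rho>))"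
      by (simp add: sum.cartesian_product' del: UNIV_Times_UNIV)
    also have "\<dots> = (\<Sum>r<nR. \<Sum>i<nI. \<Sum>j<nJ. \<Sum>x\<in>UNIV. \<Sum>a\<in>UNIV. complex_of_real (\<mu> r * p' (i*nJ+j) y r x * q' a x (i*nJ+j) y r b) *
            mtr (kraus_adj dQ' (K r) (nK*dK) (i*nJ+j) (M x a) * \<rho>))"
      by (simp only: sum_nat_pair)
    also have "\<dots> = (\<Sum>r<nR. \<Sum>i<nI. \<Sum>j<nJ. \<Sum>x\<in>UNIV. \<Sum>a\<in>UNIV. \<Sum>m<nm.
            complex_of_real (\<mu> r * p i y r (m,x) * q a x m j i y r b) * T r i j x a)"
    proof (intro sum.cong refl)
      fix r i j x a assume r: "r \<in> {..<nR}" and i: "i \<in> {..<nI}" and j: "j \<in> {..<nJ}"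
      show "complex_of_real (\<mu> r * p' (i*nJ+j) y r x * q' a x (i*nJ+j) y r b) *
            mtr (kraus_adj dQ' (K r) (nK*dK) (i*nJ+j) (M x a) * \<rho>) =
         (\<Sum>m<nm. complex_of_real (\<mu> r * p i y r (m,x) * q a x m j i y r b) * T r i j x a)"
        using key[of r i j x a] pq[of r i j x a] r i j by (simp add: sum_distrib_right)
    qed
    also have "\<dots> = (\<Sum>r<nR. \<Sum>i<nI. \<Sum>m<nm. \<Sum>x\<in>UNIV. \<Sum>a\<in>UNIV. \<Sum>j<nJ.
            complex_of_real (\<mu> r * p i y r (m,x) * q a x m j i y r b) * T r i j x a)"
      by (intro sum.cong refl perm4)
    also have "\<dots> = mtr (N y b * \<rho>)"
      using tr rho unfolding T_def by (simp add: sum.cartesian_product' del: UNIV_Times_UNIV)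
    finally show "mtr (N y b * \<rho>) = mtr (?R * \<rho>)" by simp
  qed
  show ?thesis
    unfolding pmd_succeq_def
    apply (rule exI[of _ nR], rule exI[of _ \<mu>], rule exI[of _ "nI*nJ"], rule exI[of _ "nK*dK"])
    apply (rule exI[of _ K], rule exI[of _ p'], rule exI[of _ q'])
    using mu instK pdist qdist Neq by blast
qed


theorem proposition1:
  fixes M :: "'x::finite \<Rightarrow> 'a::finite \<Rightarrow> complex mat"
    and N :: "'y::finite \<Rightarrow> 'b::finite \<Rightarrow> complex mat"
    and dQ dQ' :: nat
  assumes "pmd dQ M" and "pmd dQ' N"
  shows "pmd_succeq dQ M dQ' N \<longleftrightarrow> oneway_LOCC_convertible dQ M dQ' N"
  using dir1[OF assms] dir2[OF assms] by blast

end
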